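(* Let $\mathfrak g$ be a real nilpotent Lie algebra with a metric $\langle,\rangle_{\mathfrak g}$ satisfying $\operatorname{Ric}=\lambda\,\mathrm{id}+D$ with $\lambda\neq0$ and $D\in\operatorname{Der}\mathfrak g$. Let $\mathfrak a\subset\operatorname{Der}\mathfrak g$ be a Lie subalgebra consisting of derivations that are self-adjoint with respect to $\langle,\rangle_{\mathfrak g}$, with $D\in\mathfrak a$, and assume that the bilinear form $\langle X,Y\rangle_{\mathrm{Tr}}=\operatorname{Tr}(X\circ Y)$ is nondegenerate on $\mathfrak a$. Let $\tilde{\mathfrak g}=\mathfrak g\rtimes\mathfrak a$ be the semidirect product with $[X,v]=X(v)$ for $X\in\mathfrak a$, $v\in\mathfrak g$, and endow it with the metric $\langle,\rangle_{\mathfrak g}-\frac1\lambda\langle,\rangle_{\mathrm{Tr}}$ (with $\mathfrak g\perp\mathfrak a$). Then this metric is Einstein with $\widetilde{\operatorname{Ric}}=\lambda\,\mathrm{id}$, and $\tilde{\mathfrak g}=\mathfrak g\oplus^\perp\mathfrak a$ is a pseudo-Iwasawa decomposition.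
   Context: A metric on a Lie algebra is a nondegenerate symmetric bilinear form, possibly indefinite; Ricci operators are those of the corresponding left-invariant pseudo-Riemannian metrics on simply connected Lie groups. A pseudo-Iwasawa decomposition of a metric Lie algebra $\tilde{\mathfrak g}$ is an orthogonal direct sum of vector spaces $\tilde{\mathfrak g}=\mathfrak g\oplus^\perp\mathfrak a$ with $\mathfrak g$ a nilpotent ideal, $\mathfrak a$ an abelian subalgebra, and $\operatorname{ad}X$ self-adjoint for every $X\in\mathfrak a$. *)

theory Defs
  imports "HOL-Analysis.Analysis"
begin

text \<open>A (real, finite-dimensional) Lie algebra is modelled as a linear subspace V of a
 Euclidean-space type together with a bracket defined on the ambient type.\<close>

definition lie_algebra :: "'v::euclidean_space set \<Rightarrow> ('v \<Rightarrow> 'v \<Rightarrow> 'v) \<Rightarrow> bool" where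
  "lie_algebra V br \<longleftrightarrow> subspace V \<and> bilinear br \<and>
     (\<forall>x\<in>V. \<forall>y\<in>V. br x y \<in> V) \<and>
     (\<forall>x\<in>V. br x x = 0) \<and>
     (\<forall>x\<in>V. \<forall>y\<in>V. \<forall>z\<in>V. br x (br y z) + br y (br z x) + br z (br x y) = 0)"

fun lower_central :: "'v::euclidean_space set \<Rightarrow> ('v \<Rightarrow> 'v \<Rightarrow> 'v) \<Rightarrow> nat \<Rightarrow> 'v set" where
  "lower_central V br 0 = V"
| "lower_central V br (Suc k) = span {br x y | x y. x \<in> V \<and> y \<in> lower_central V br k}"

definition nilpotent_lie :: "'v::euclidean_space set \<Rightarrow> ('v \<Rightarrow> 'v \<Rightarrow> 'v) \<Rightarrow> bool" where
  "nilpotent_lie V br \<longleftrightarrow> (\<exists>k. lower_central V br k = {0})"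

text \<open>A metric: nondegenerate symmetric bilinear form (possibly indefinite) on V.\<close>
definition lie_metric :: "'v::euclidean_space set \<Rightarrow> ('v \<Rightarrow> 'v \<Rightarrow> real) \<Rightarrow> bool" where
  "lie_metric V B \<longleftrightarrow> bilinear B \<and> (\<forall>x\<in>V. \<forall>y\<in>V. B x y = B y x) \<and>
     (\<forall>x\<in>V. (\<forall>y\<in>V. B x y = 0) \<longrightarrow> x = 0)"

definition basis_of :: "'v::euclidean_space set \<Rightarrow> 'v set" where
  "basis_of V = (SOME S. S \<subseteq> V \<and> independent S \<and> span S = V)"

definition trace_on :: "'v::euclidean_space set \<Rightarrow> ('v \<Rightarrow> 'v) \<Rightarrow> real" where
  "trace_on V f = (\<Sum>b\<in>basis_of V. real_vector.representation (basis_of V) (f b) b)"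

text \<open>Levi-Civita connection of the left-invariant metric (Koszul formula).\<close>
definition levi_civita :: "'v::euclidean_space set \<Rightarrow> ('v \<Rightarrow> 'v \<Rightarrow> 'v) \<Rightarrow> ('v \<Rightarrow> 'v \<Rightarrow> real)
    \<Rightarrow> 'v \<Rightarrow> 'v \<Rightarrow> 'v" where
  "levi_civita V br B X Y = (THE W. W \<in> V \<and>
     (\<forall>Z\<in>V. B W Z = (B (br X Y) Z - B (br Y Z) X + B (br Z X) Y) / 2))"

definition curvature :: "'v::euclidean_space set \<Rightarrow> ('v \<Rightarrow> 'v \<Rightarrow> 'v) \<Rightarrow> ('v \<Rightarrow> 'v \<Rightarrow> real)
    \<Rightarrow> 'v \<Rightarrow> 'v \<Rightarrow> 'v \<Rightarrow> 'v" where
  "curvature V br B X Y Z =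
     levi_civita V br B X (levi_civita V br B Y Z) - levi_civita V br B Y (levi_civita V br B X Z)
     - levi_civita V br B (br X Y) Z"

definition ricci_form :: "'v::euclidean_space set \<Rightarrow> ('v \<Rightarrow> 'v \<Rightarrow> 'v) \<Rightarrow> ('v \<Rightarrow> 'v \<Rightarrow> real)
    \<Rightarrow> 'v \<Rightarrow> 'v \<Rightarrow> real" where
  "ricci_form V br B Y Z = trace_on V (\<lambda>X. curvature V br B X Y Z)"

definition ricci_op :: "'v::euclidean_space set \<Rightarrow> ('v \<Rightarrow> 'v \<Rightarrow> 'v) \<Rightarrow> ('v \<Rightarrow> 'v \<Rightarrow> real)
    \<Rightarrow> 'v \<Rightarrow> 'v" where
  "ricci_op V br B Y = (THE W. W \<in> V \<and> (\<forall>Z\<in>V. B W Z = ricci_form V br B Y Z))"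

definition pseudo_iwasawa :: "'v::euclidean_space set \<Rightarrow> ('v \<Rightarrow> 'v \<Rightarrow> 'v) \<Rightarrow> ('v \<Rightarrow> 'v \<Rightarrow> real)
    \<Rightarrow> 'v set \<Rightarrow> 'v set \<Rightarrow> bool" where
  "pseudo_iwasawa V br B G Aa \<longleftrightarrow>
     subspace G \<and> subspace Aa \<and> G \<subseteq> V \<and> Aa \<subseteq> V \<and>
     G \<inter> Aa = {0} \<and> {x + y | x y. x \<in> G \<and> y \<in> Aa} = V \<and>
     (\<forall>x\<in>G. \<forall>y\<in>Aa. B x y = 0) \<and>
     (\<forall>x\<in>V. \<forall>y\<in>G. br x y \<in> G) \<and> nilpotent_lie G br \<and>
     (\<forall>x\<in>Aa. \<forall>y\<in>Aa. br x y = 0) \<and>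
     (\<forall>X\<in>Aa. \<forall>u\<in>V. \<forall>w\<in>V. B (br X u) w = B u (br X w))"

definition is_derivation :: "(real^'n \<Rightarrow> real^'n \<Rightarrow> real^'n) \<Rightarrow> real^'n^'n \<Rightarrow> bool" where
  "is_derivation br M \<longleftrightarrow> (\<forall>x y. M *v br x y = br (M *v x) y + br x (M *v y))"

definition self_adjoint_wrt :: "(real^'n \<Rightarrow> real^'n \<Rightarrow> real) \<Rightarrow> real^'n^'n \<Rightarrow> bool" where
  "self_adjoint_wrt B M \<longleftrightarrow> (\<forall>x y. B (M *v x) y = B x (M *v y))"

definition sd_bracket :: "(real^'n \<Rightarrow> real^'n \<Rightarrow> real^'n) \<Rightarrow>
    ((real^'n) \<times> (real^'n^'n)) \<Rightarrow> ((real^'n) \<times> (real^'n^'n)) \<Rightarrow> ((real^'n) \<times> (real^'n^'n))" where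
  "sd_bracket br p q = (br (fst p) (fst q) + snd p *v fst q - snd q *v fst p,
                        snd p ** snd q - snd q ** snd p)"

definition sd_metric :: "(real^'n \<Rightarrow> real^'n \<Rightarrow> real) \<Rightarrow> real \<Rightarrow>
    ((real^'n) \<times> (real^'n^'n)) \<Rightarrow> ((real^'n) \<times> (real^'n^'n)) \<Rightarrow> real" where
  "sd_metric B lam p q = B (fst p) (fst q) - (1 / lam) * trace (snd p ** snd q)"

end

theory Submission
  imports Defs
begin

definition lin_on :: "'a::real_vector set \<Rightarrow> ('a \<Rightarrow> 'b::real_vector) \<Rightarrow> bool" where
  "lin_on V f \<longleftrightarrow> (\<forall>x\<in>V. \<forall>y\<in>V. f (x + y) = f x + f y) \<and> (\<forall>c. \<forall>x\<in>V. f (c *\<^sub>R x) = c *\<^sub>R f x)"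

lemma linear_lin_on: "linear f \<Longrightarrow> lin_on V f"
  by (simp add: lin_on_def linear_add linear_scale)

lemma lin_on_sum:
  assumes "subspace V" "lin_on V f" "\<And>i. i \<in> I \<Longrightarrow> x i \<in> V"
  shows "f (\<Sum>i\<in>I. a i *\<^sub>R x i) = (\<Sum>i\<in>I. a i *\<^sub>R f (x i))"
  using assms(3)
proof (induction I rule: infinite_finite_induct)
  case (infinite A)
  then show ?case using assms(2) unfolding lin_on_def
    by (metis assms(1) scale_zero_left subspace_0 sum.infinite)
next
  case empty
  then show ?case using assms(1,2) unfolding lin_on_def
    by (metis scale_zero_left subspace_0 sum.empty)
next
  case (insert y F)
  have "(\<Sum>i\<in>F. a i *\<^sub>R x i) \<in> V" using insert assms(1)
    by (intro subspace_sum subspace_scale) auto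
  moreover have "a y *\<^sub>R x y \<in> V" using insert assms(1) by (simp add: subspace_scale)
  ultimately show ?case using insert assms(2) unfolding lin_on_def by simp
qed

lemma basis_of_props:
  assumes "subspace V"
  shows "basis_of V \<subseteq> V" "independent (basis_of V)" "span (basis_of V) = V" "finite (basis_of V)"
proof -
  obtain S where S: "S \<subseteq> V" "independent S" "V \<subseteq> span S"
    using basis_exists[of V] by metis
  have "span S = V" using S assms by (simp add: span_minimal subset_antisym)
  then have ex: "\<exists>S. S \<subseteq> V \<and> independent S \<and> span S = V" using S by blast
  have "basis_of V \<subseteq> V \<and> independent (basis_of V) \<and> span (basis_of V) = V"
    unfolding basis_of_def by (rule someI_ex[OF ex])
  then show "basis_of V \<subseteq> V" "independent (basis_of V)" "span (basis_of V) = V" by auto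
  then show "finite (basis_of V)" using independent_imp_finite by blast
qed

lemma trace_on_cong: "(\<And>x. x \<in> V \<Longrightarrow> f x = g x) \<Longrightarrow> subspace V \<Longrightarrow> trace_on V f = trace_on V g"
  unfolding trace_on_def using basis_of_props(1) by (metis (no_types, lifting) subsetD sum.cong)

lemma trace_frame:
  assumes V: "subspace V" and f: "lin_on V f" "\<And>x. x \<in> V \<Longrightarrow> f x \<in> V"
    and I: "finite I" and c: "\<And>i. i \<in> I \<Longrightarrow> c i \<in> V"
    and phi: "\<And>i. i \<in> I \<Longrightarrow> lin_on V (\<phi> i)"
    and exp: "\<And>x. x \<in> V \<Longrightarrow> x = (\<Sum>i\<in>I. \<phi> i x *\<^sub>R c i)"
  shows "trace_on V f = (\<Sum>i\<in>I. \<phi> i (f (c i)))"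
proof -
  let ?S = "basis_of V"
  note SP = basis_of_props[OF V]
  let ?R = "real_vector.representation ?S"
  have fc: "f (c i) \<in> span ?S" if "i \<in> I" for i using SP c f that by auto
  have 1: "?R (f b) b = (\<Sum>i\<in>I. \<phi> i b * ?R (f (c i)) b)" if b: "b \<in> ?S" for b
  proof -
    have bV: "b \<in> V" using b SP by auto
    have "f b = (\<Sum>i\<in>I. \<phi> i b *\<^sub>R f (c i))"
      using lin_on_sum[OF V f(1), of I c "\<lambda>i. \<phi> i b"] exp[OF bV] c by simp
    then have "?R (f b) = ?R (\<Sum>i\<in>I. \<phi> i b *\<^sub>R f (c i))" by simp
    also have "\<dots> = (\<lambda>bb. \<Sum>i\<in>I. ?R (\<phi> i b *\<^sub>R f (c i)) bb)"
      using SP fc by (intro real_vector.representation_sum) (auto intro: span_scale simp: V subspace_scale)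
    also have "\<dots> = (\<lambda>bb. \<Sum>i\<in>I. \<phi> i b * ?R (f (c i)) bb)"
      using SP fc by (simp add: real_vector.representation_scale)
    finally show ?thesis by simp
  qed
  have "trace_on V f = (\<Sum>b\<in>?S. ?R (f b) b)" by (simp add: trace_on_def)
  also have "\<dots> = (\<Sum>b\<in>?S. \<Sum>i\<in>I. \<phi> i b * ?R (f (c i)) b)" using 1 by simp
  also have "\<dots> = (\<Sum>i\<in>I. \<Sum>b\<in>?S. ?R (f (c i)) b *\<^sub>R \<phi> i b)"
    by (subst sum.swap) (simp add: mult.commute)
  also have "\<dots> = (\<Sum>i\<in>I. \<phi> i (\<Sum>b\<in>?S. ?R (f (c i)) b *\<^sub>R b))"
  proof (intro sum.cong refl)
    fix i assume i: "i \<in> I"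
    show "(\<Sum>b\<in>?S. ?R (f (c i)) b *\<^sub>R \<phi> i b) = \<phi> i (\<Sum>b\<in>?S. ?R (f (c i)) b *\<^sub>R b)"
      using lin_on_sum[OF V phi[OF i], of ?S "\<lambda>b. b" "\<lambda>b. ?R (f (c i)) b"] SP by (auto simp: subset_iff)
  qed
  also have "\<dots> = (\<Sum>i\<in>I. \<phi> i (f (c i)))"
    using SP fc by (intro sum.cong refl) (simp add: real_vector.sum_representation_eq)
  finally show ?thesis .
qed

lemma lin_on_mono: "lin_on V f \<Longrightarrow> W \<subseteq> V \<Longrightarrow> lin_on W f"
  unfolding lin_on_def by blast

lemma lin_on_rep:
  assumes "independent S" "span S = V"
  shows "lin_on V (\<lambda>x. real_vector.representation S x b)"
  using assms unfolding lin_on_def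
  by (simp add: real_vector.representation_add real_vector.representation_scale)

lemma trace_on_basis:
  assumes V: "subspace V" and f: "lin_on V f" "\<And>x. x \<in> V \<Longrightarrow> f x \<in> V"
    and S: "independent S" "span S = V"
  shows "trace_on V f = (\<Sum>b\<in>S. real_vector.representation S (f b) b)"
proof (rule trace_frame[OF V f, where c="\<lambda>b. b"])
  show "finite S" using S independent_imp_finite by blast
  show "b \<in> V" if "b \<in> S" for b using S that span_base by blast
  show "lin_on V (\<lambda>x. real_vector.representation S x b)" for b using lin_on_rep[OF S] .
  show "x = (\<Sum>b\<in>S. real_vector.representation S x b *\<^sub>R b)" if "x \<in> V" for x
  proof -
    have "finite S" using S independent_imp_finite by blast
    moreover have "x \<in> span S" using S that by simp
    ultimately show ?thesis using real_vector.sum_representation_eq[of S x S] S(1) by simp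
  qed
qed

lemma trace_on_sub:
  assumes V: "subspace V" and W: "subspace W" "W \<subseteq> V" and f: "lin_on V f" "\<And>x. x \<in> V \<Longrightarrow> f x \<in> W"
  shows "trace_on V f = trace_on W f"
proof -
  let ?SW = "basis_of W"
  note SW = basis_of_props[OF W(1)]
  obtain S where S: "?SW \<subseteq> S" "S \<subseteq> V" "independent S" "V \<subseteq> span S"
    using maximal_independent_subset_extend[of ?SW V] SW W(2) by blast
  have spS: "span S = V" using S V by (simp add: span_minimal subset_antisym)
  have finS: "finite S" using S independent_imp_finite by blast
  have "trace_on V f = (\<Sum>b\<in>S. real_vector.representation S (f b) b)"
    using trace_on_basis[OF V f(1) _ S(3) spS] f(2) W(2) by blast
  also have "\<dots> = (\<Sum>b\<in>S. real_vector.representation ?SW (f b) b)"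
  proof (intro sum.cong refl)
    fix b assume "b \<in> S"
    then have "b \<in> V" using S(2) by blast
    then have "f b \<in> W" using f(2) by blast
    then have "f b \<in> span ?SW" using SW(3) by simp
    then show "real_vector.representation S (f b) b = real_vector.representation ?SW (f b) b"
      using real_vector.representation_extend[OF S(3) _ S(1)] by simp
  qed
  also have "\<dots> = (\<Sum>b\<in>?SW. real_vector.representation ?SW (f b) b)"
    using finS S(1) real_vector.representation_ne_zero
    by (intro sum.mono_neutral_right) auto
  also have "\<dots> = trace_on W f" by (simp add: trace_on_def)
  finally show ?thesis .
qed

lemma trace_on_zero_space:
  fixes f :: "'a::euclidean_space \<Rightarrow> 'a"
  shows "trace_on {0} f = 0"
proof -
  have "basis_of {0::'a} \<subseteq> {0}" "independent (basis_of {0::'a})"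
    using basis_of_props[of "{0::'a}"] subspace_0 by auto
  then have "0 \<notin> basis_of {0::'a}" using real_vector.dependent_zero by metis
  then have "basis_of {0::'a} = {}" using \<open>basis_of {0::'a} \<subseteq> {0}\<close> by blast
  then show ?thesis by (simp add: trace_on_def)
qed

lemma trace_on_flag:
  assumes sub: "\<And>k. subspace (C k)" and dec: "\<And>k. C (Suc k) \<subseteq> C k"
    and C0: "C 0 = V" and Cm: "C m = {0}"
    and f: "lin_on V f" "\<And>k x. x \<in> C k \<Longrightarrow> f x \<in> C (Suc k)"
  shows "trace_on V f = 0"
proof -
  have CV: "C k \<subseteq> V" for k
  proof (induction k)
    case 0 then show ?case using C0 by simp
  next
    case (Suc k) then show ?case using dec by blast
  qed
  have "trace_on (C k) f = trace_on (C 0) f" for k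
  proof (induction k)
    case 0 then show ?case by simp
  next
    case (Suc k)
    have "trace_on (C k) f = trace_on (C (Suc k)) f"
      using trace_on_sub[OF sub sub dec lin_on_mono[OF f(1) CV] f(2)] by blast
    then show ?case using Suc by simp
  qed
  from this[of m] show ?thesis using Cm C0 trace_on_zero_space[of f] by simp
qed

lemma bil_lsum: "bilinear h \<Longrightarrow> h (\<Sum>i\<in>I. g i) y = (\<Sum>i\<in>I. h (g i) y)"
  unfolding bilinear_def using linear_sum[of "\<lambda>x. h x y"] by (simp add: o_def)
lemma bil_rsum: "bilinear h \<Longrightarrow> h y (\<Sum>i\<in>I. g i) = (\<Sum>i\<in>I. h y (g i))"
  unfolding bilinear_def using linear_sum[of "\<lambda>x. h y x"] by (simp add: o_def)

lemma riesz:
  fixes V :: "'a::euclidean_space set" and Bf :: "'a \<Rightarrow> 'a \<Rightarrow> real"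
  assumes V: "subspace V" and bil: "bilinear Bf"
    and sym: "\<And>x y. x \<in> V \<Longrightarrow> y \<in> V \<Longrightarrow> Bf x y = Bf y x"
    and nd: "\<And>x. x \<in> V \<Longrightarrow> (\<forall>y\<in>V. Bf x y = 0) \<Longrightarrow> x = 0"
    and l: "lin_on V l"
  shows "\<exists>y\<in>V. \<forall>x\<in>V. Bf y x = l x"
proof -
  obtain OB where OB: "OB \<subseteq> V" "pairwise orthogonal OB" "\<And>x. x \<in> OB \<Longrightarrow> norm x = 1"
    "independent OB" "span OB = V"
    using orthonormal_basis_subspace[OF V] by metis
  have fin: "finite OB" using OB(4) independent_imp_finite by blast
  have exp: "x = (\<Sum>b\<in>OB. (x \<bullet> b) *\<^sub>R b)" if "x \<in> V" for x
    using orthonormal_basis_expand[OF OB(2) OB(3) _ fin, of x] that OB(5) by simp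
  define F where "F y = (\<Sum>b\<in>OB. Bf b y *\<^sub>R b)" for y
  have linF: "linear F"
    unfolding F_def using bil
    by (intro linearI) (simp_all add: bilinear_radd bilinear_rmul scaleR_add_left sum.distrib scaleR_sum_right)
  have FV: "F y \<in> V" for y unfolding F_def using OB(1) V
    by (intro subspace_sum subspace_scale) auto
  have key: "x \<bullet> F y = Bf x y" if "x \<in> V" for x y
  proof -
    have "x \<bullet> F y = (\<Sum>b\<in>OB. (x \<bullet> b) * Bf b y)"
      unfolding F_def by (simp add: inner_sum_right mult.commute)
    also have "\<dots> = Bf (\<Sum>b\<in>OB. (x \<bullet> b) *\<^sub>R b) y"
      using bil by (simp add: bil_lsum bilinear_lmul)
    also have "\<dots> = Bf x y" using exp[OF that] by simp
    finally show ?thesis .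
  qed
  have F0: "y = 0" if "y \<in> V" "F y = 0" for y
  proof -
    have "\<forall>x\<in>V. Bf y x = 0" using key that sym by (metis inner_zero_right)
    then show ?thesis using nd that by blast
  qed
  have inj: "inj_on F V"
  proof (rule inj_onI)
    fix x y assume "x \<in> V" "y \<in> V" "F x = F y"
    then have "F (x - y) = 0" "x - y \<in> V" using linF V by (auto simp: linear_diff subspace_diff)
    then show "x = y" using F0 by force
  qed
  have "span V = V" using V by (simp add: span_eq_iff)
  then have "inj_on F (span V)" using inj by metis
  then have "dim (F ` V) = dim V" using eucl.dim_image_eq[OF linF] by blast
  moreover have "subspace (F ` V)" using linF V real_vector.linear_subspace_image by blast
  moreover have "F ` V \<subseteq> V" using FV by auto
  ultimately have FVV: "F ` V = V" using subspace_dim_equal V by (metis order_refl)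
  define w where "w = (\<Sum>b\<in>OB. l b *\<^sub>R b)"
  have wV: "w \<in> V" unfolding w_def using OB(1) V by (intro subspace_sum subspace_scale) auto
  have lw: "l x = x \<bullet> w" if "x \<in> V" for x
  proof -
    have "l x = l (\<Sum>b\<in>OB. (x \<bullet> b) *\<^sub>R b)" using exp[OF that] by simp
    also have "\<dots> = (\<Sum>b\<in>OB. (x \<bullet> b) * l b)" using lin_on_sum[OF V l, of OB "\<lambda>b. b" "\<lambda>b. x \<bullet> b"] OB(1) by auto
    also have "\<dots> = x \<bullet> w" unfolding w_def by (simp add: inner_sum_right mult.commute)
    finally show ?thesis .
  qed
  obtain y where y: "y \<in> V" "F y = w" using wV FVV by (metis imageE)
  show ?thesis
  proof (intro bexI[OF _ y(1)] ballI)
    fix x assume "x \<in> V"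
    then show "Bf y x = l x" using lw key y sym by metis
  qed
qed

abbreviation E :: "'n::finite \<Rightarrow> real^'n" where "E i \<equiv> axis i 1"

lemma E_nth: "E i $ j = (if j = i then 1 else 0)"
  by (simp add: axis_def)

lemma vec_expand: "(\<Sum>i\<in>UNIV. (x::real^'n) $ i *\<^sub>R E i) = x"
  by (simp add: vec_eq_iff sum_component E_nth if_distrib cong: if_cong)

definition tr :: "(real^'n \<Rightarrow> real^'n) \<Rightarrow> real" where
  "tr f = (\<Sum>i\<in>UNIV. f (E i) $ i)"

lemma tr_add: "tr (\<lambda>x. f x + g x) = tr f + tr g"
  by (simp add: tr_def sum.distrib)
lemma tr_diff: "tr (\<lambda>x. f x - g x) = tr f - tr g"
  by (simp add: tr_def sum_subtractf)
lemma tr_scale: "tr (\<lambda>x. c *\<^sub>R f x) = c * tr f"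
  by (simp add: tr_def sum_distrib_left)
lemma tr_neg: "tr (\<lambda>x. - f x) = - tr f"
  by (simp add: tr_def sum_negf)
lemma tr_zero: "tr (\<lambda>x. 0) = 0"
  by (simp add: tr_def)
lemma tr_matrix: "tr (\<lambda>x. M *v x) = trace M"
  by (simp add: tr_def trace_def matrix_vector_mult_def E_nth if_distrib cong: if_cong)

lemma linear_expand: "linear f \<Longrightarrow> f x = (\<Sum>i\<in>UNIV. x $ i *\<^sub>R f (E i))"
proof -
  assume "linear f"
  then have "f (\<Sum>i\<in>UNIV. x $ i *\<^sub>R E i) = (\<Sum>i\<in>UNIV. x $ i *\<^sub>R f (E i))"
    by (simp add: linear_sum linear_scale o_def)
  then show ?thesis using vec_expand[of x] by simp
qed

lemma tr_comp: assumes "linear f" "linear g" shows "tr (\<lambda>x. f (g x)) = tr (\<lambda>x. g (f x))"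
proof -
  have "tr (\<lambda>x. f (g x)) = (\<Sum>i\<in>UNIV. \<Sum>j\<in>UNIV. g (E i) $ j * f (E j) $ i)"
    unfolding tr_def by (subst linear_expand[OF assms(1)]) (simp add: sum_component)
  also have "\<dots> = (\<Sum>j\<in>UNIV. \<Sum>i\<in>UNIV. f (E j) $ i * g (E i) $ j)"
    by (subst sum.swap) (simp add: mult.commute)
  also have "\<dots> = tr (\<lambda>x. g (f x))"
    unfolding tr_def by (subst linear_expand[OF assms(2)]) (simp add: sum_component)
  finally show ?thesis .
qed

lemma trace_on_UNIV:
  fixes f :: "real^'n \<Rightarrow> real^'n"
  assumes "linear f" shows "trace_on UNIV f = tr f"
proof -
  have "trace_on UNIV f = (\<Sum>i\<in>UNIV. f (E i) $ i)"
  proof (rule trace_frame[where c = "\<lambda>i. E i" and \<phi> = "\<lambda>i x. x $ i"])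
    show "lin_on UNIV f" using assms by (rule linear_lin_on)
    show "lin_on UNIV (\<lambda>x. x $ i)" for i :: 'n by (simp add: lin_on_def)
    show "x = (\<Sum>i\<in>UNIV. x $ i *\<^sub>R E i)" for x :: "real^'n" by (rule vec_expand[symmetric])
  qed auto
  then show ?thesis by (simp add: tr_def)
qed

lemma tr_eq_trace_on: "linear f \<Longrightarrow> tr f = trace_on UNIV f"
  using trace_on_UNIV by metis

lemma bil_rsc: "bilinear (h::'a::real_vector \<Rightarrow> 'b::real_vector \<Rightarrow> real) \<Longrightarrow> h y (\<Sum>i\<in>I. c i *\<^sub>R g i) = (\<Sum>i\<in>I. c i * h y (g i))"
  by (simp add: bil_rsum bilinear_rmul)
lemma bil_lsc: "bilinear (h::'a::real_vector \<Rightarrow> 'b::real_vector \<Rightarrow> real) \<Longrightarrow> h (\<Sum>i\<in>I. c i *\<^sub>R g i) y = (\<Sum>i\<in>I. c i * h (g i) y)"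
  by (simp add: bil_lsum bilinear_lmul)

lemma bilinear_comp: "bilinear h \<Longrightarrow> linear f \<Longrightarrow> linear g \<Longrightarrow> bilinear (\<lambda>a b. h (f a) (g b))"
  unfolding bilinear_def
  by (auto intro: linear_compose[of g "h (f _)", unfolded o_def] linear_compose[of f "\<lambda>x. h x (g _)", unfolded o_def])

locale gmet =
  fixes B :: "real^'n \<Rightarrow> real^'n \<Rightarrow> real"
  assumes met: "lie_metric UNIV B"
begin

lemma bil: "bilinear B" and sym: "B x y = B y x" and nd: "(\<And>y. B x y = 0) \<Longrightarrow> x = 0"
  using met unfolding lie_metric_def by auto

lemma B_eqI: "(\<And>z. B x z = B y z) \<Longrightarrow> x = y"
proof -
  assume "\<And>z. B x z = B y z"
  then have "\<And>z. B (x - y) z = 0" using bil by (simp add: bilinear_lsub)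
  then show "x = y" using nd by force
qed

lemma B_eqI2: "(\<And>z. B z x = B z y) \<Longrightarrow> x = y"
  using B_eqI sym by metis

definition F :: "'n \<Rightarrow> real^'n" where "F i = (SOME y. \<forall>x. B y x = x $ i)"

lemma BF: "B (F i) x = x $ i"
proof -
  have "lin_on UNIV (\<lambda>x::real^'n. x $ i)" by (simp add: lin_on_def)
  then have "\<exists>y\<in>UNIV. \<forall>x\<in>UNIV. B y x = x $ i"
    using riesz[of UNIV B] bil sym nd by auto
  then have "\<exists>y. \<forall>x. B y x = x $ i" by simp
  then have "\<forall>x. B (F i) x = x $ i" unfolding F_def by (rule someI_ex)
  then show ?thesis by blast
qed

lemma BF2: "B x (F i) = x $ i" using BF[of i x] sym[of x "F i"] by simp

lemma BEF: "B (E j) (F i) = (if i = j then 1 else 0)" by (simp add: BF2 E_nth)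

lemma exp2: "(\<Sum>i\<in>UNIV. B x (E i) *\<^sub>R F i) = x"
proof (rule B_eqI)
  fix z
  have "B (\<Sum>i\<in>UNIV. B x (E i) *\<^sub>R F i) z = (\<Sum>i\<in>UNIV. B x (E i) * z $ i)"
    by (simp add: bil_lsc[OF bil] BF)
  also have "\<dots> = B x (\<Sum>i\<in>UNIV. z $ i *\<^sub>R E i)"
    by (simp add: bil_rsc[OF bil] mult.commute)
  also have "\<dots> = B x z" by (simp add: vec_expand)
  finally show "B (\<Sum>i\<in>UNIV. B x (E i) *\<^sub>R F i) z = B x z" .
qed

lemma tr_B: "tr f = (\<Sum>i\<in>UNIV. B (f (E i)) (F i))"
  by (simp add: tr_def BF2)

lemma Fnth_sym: "F k $ i = F i $ k"
  using BF[of i "F k"] BF[of k "F i"] sym[of "F i" "F k"] by simp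

lemma ctr_swap:
  fixes \<phi> :: "real^'n \<Rightarrow> real^'n \<Rightarrow> real"
  assumes "bilinear \<phi>"
  shows "(\<Sum>i\<in>UNIV. \<phi> (E i) (F i)) = (\<Sum>i\<in>UNIV. \<phi> (F i) (E i))"
proof -
  have 1: "\<phi> (E i) (F i) = (\<Sum>k\<in>UNIV. F i $ k * \<phi> (E i) (E k))" for i
  proof -
    have "\<phi> (E i) (F i) = \<phi> (E i) (\<Sum>k\<in>UNIV. F i $ k *\<^sub>R E k)" by (simp only: vec_expand)
    then show ?thesis by (simp only: bil_rsc[OF assms])
  qed
  have 2: "\<phi> (F k) (E k) = (\<Sum>i\<in>UNIV. F k $ i * \<phi> (E i) (E k))" for k
  proof -
    have "\<phi> (F k) (E k) = \<phi> (\<Sum>i\<in>UNIV. F k $ i *\<^sub>R E i) (E k)" by (simp only: vec_expand)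
    then show ?thesis by (simp only: bil_lsc[OF assms])
  qed
  have "(\<Sum>i\<in>UNIV. \<phi> (E i) (F i)) = (\<Sum>i\<in>UNIV. \<Sum>k\<in>UNIV. F i $ k * \<phi> (E i) (E k))"
    by (simp only: 1)
  also have "\<dots> = (\<Sum>k\<in>UNIV. \<Sum>i\<in>UNIV. F k $ i * \<phi> (E i) (E k))"
    by (subst sum.swap) (simp only: Fnth_sym)
  also have "\<dots> = (\<Sum>k\<in>UNIV. \<phi> (F k) (E k))"
    by (simp only: 2)
  finally show ?thesis .
qed

lemma ctr_antisym:
  fixes \<phi> :: "real^'n \<Rightarrow> real^'n \<Rightarrow> real"
  assumes "bilinear \<phi>" "\<And>a b. \<phi> a b = - \<phi> b a"
  shows "(\<Sum>i\<in>UNIV. \<phi> (E i) (F i)) = 0"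
proof -
  have "(\<Sum>i\<in>UNIV. \<phi> (E i) (F i)) = (\<Sum>i\<in>UNIV. \<phi> (F i) (E i))" by (rule ctr_swap[OF assms(1)])
  also have "\<dots> = (\<Sum>i\<in>UNIV. - \<phi> (E i) (F i))" by (rule sum.cong[OF refl], rule assms(2))
  also have "\<dots> = - (\<Sum>i\<in>UNIV. \<phi> (E i) (F i))" by (simp add: sum_negf)
  finally show ?thesis by simp
qed

lemma ctr_selfadj:
  fixes \<phi> :: "real^'n \<Rightarrow> real^'n \<Rightarrow> real"
  assumes "bilinear \<phi>" "linear S" "\<And>x y. B (S x) y = B x (S y)"
  shows "(\<Sum>i\<in>UNIV. \<phi> (S (E i)) (F i)) = (\<Sum>i\<in>UNIV. \<phi> (E i) (S (F i)))"
proof -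
  have 1: "\<phi> (S (E i)) (F i) = (\<Sum>k\<in>UNIV. S (E i) $ k * \<phi> (E k) (F i))" for i
  proof -
    have "\<phi> (S (E i)) (F i) = \<phi> (\<Sum>k\<in>UNIV. S (E i) $ k *\<^sub>R E k) (F i)" by (simp only: vec_expand)
    then show ?thesis by (simp only: bil_lsc[OF assms(1)])
  qed
  have 2: "(\<Sum>i\<in>UNIV. S (E i) $ k * \<phi> (E k) (F i)) = \<phi> (E k) (S (F k))" for k
  proof -
    have "S (E i) $ k = B (S (F k)) (E i)" for i using BF[of k "S (E i)"] assms(3)[of "F k" "E i"] by simp
    then have "(\<Sum>i\<in>UNIV. S (E i) $ k * \<phi> (E k) (F i)) = \<phi> (E k) (\<Sum>i\<in>UNIV. B (S (F k)) (E i) *\<^sub>R F i)"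
      by (simp only: bil_rsc[OF assms(1)])
    then show ?thesis by (simp only: exp2)
  qed
  have "(\<Sum>i\<in>UNIV. \<phi> (S (E i)) (F i)) = (\<Sum>i\<in>UNIV. \<Sum>k\<in>UNIV. S (E i) $ k * \<phi> (E k) (F i))"
    by (simp only: 1)
  also have "\<dots> = (\<Sum>k\<in>UNIV. \<Sum>i\<in>UNIV. S (E i) $ k * \<phi> (E k) (F i))"
    by (rule sum.swap)
  also have "\<dots> = (\<Sum>k\<in>UNIV. \<phi> (E k) (S (F k)))"
    by (simp only: 2)
  finally show ?thesis .
qed

definition adj :: "(real^'n \<Rightarrow> real^'n) \<Rightarrow> real^'n \<Rightarrow> real^'n" where
  "adj f y = (\<Sum>i\<in>UNIV. B (f (E i)) y *\<^sub>R F i)"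

lemma adj_linear: "linear (adj f)"
  unfolding adj_def using bil
  by (intro linearI) (simp_all add: bilinear_radd bilinear_rmul scaleR_add_left sum.distrib scaleR_sum_right)

lemma adj_B: assumes "linear f" shows "B x (adj f y) = B (f x) y"
proof -
  have "B x (adj f y) = (\<Sum>i\<in>UNIV. x $ i * B (f (E i)) y)"
    unfolding adj_def by (simp add: bil_rsc[OF bil] BF2 mult.commute)
  also have "\<dots> = B (\<Sum>i\<in>UNIV. x $ i *\<^sub>R f (E i)) y" by (simp add: bil_lsc[OF bil])
  also have "\<dots> = B (f x) y" by (subst linear_expand[OF assms, of x]) (rule refl)
  finally show ?thesis .
qed

lemma adj_B2: "linear f \<Longrightarrow> B (adj f y) x = B y (f x)"
  by (simp add: sym[of "adj f y" x] adj_B sym[of "f x" y])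

lemma adj_unique: assumes "linear f" "\<And>x y. B (f x) y = B x (h y)" shows "adj f y = h y"
  by (rule B_eqI2) (simp add: adj_B assms)

lemma tr_adj: assumes "linear f" shows "tr (adj f) = tr f"
proof -
  have "tr (adj f) = (\<Sum>i\<in>UNIV. B (E i) (f (F i)))"
    unfolding tr_B by (simp add: adj_B2[OF assms])
  also have "\<dots> = (\<Sum>i\<in>UNIV. B (F i) (f (E i)))"
    using ctr_swap[of "\<lambda>a b. B (id a) (f b)"] bilinear_comp[OF bil linear_id assms] by simp
  also have "\<dots> = (\<Sum>i\<in>UNIV. B (f (E i)) (F i))" by (simp add: sym)
  finally show ?thesis by (simp add: tr_B)
qed

lemma tr_adj_comp:
  assumes "linear f" "linear g"
  shows "tr (\<lambda>x. adj f (g x)) = tr (\<lambda>x. adj g (f x))"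
proof -
  have "tr (\<lambda>x. adj f (g x)) = (\<Sum>i\<in>UNIV. B (g (E i)) (f (F i)))"
    unfolding tr_B by (simp add: adj_B2[OF assms(1)])
  also have "\<dots> = (\<Sum>i\<in>UNIV. B (g (F i)) (f (E i)))"
    using ctr_swap[of "\<lambda>a b. B (g a) (f b)"] bilinear_comp[OF bil assms(2) assms(1)] by simp
  also have "\<dots> = (\<Sum>i\<in>UNIV. B (f (E i)) (g (F i)))"
    by (rule sum.cong[OF refl], rule sym)
  also have "\<dots> = tr (\<lambda>x. adj g (f x))"
    unfolding tr_B by (simp add: adj_B2[OF assms(2)])
  finally show ?thesis .
qed

end

locale glie = gmet B for B :: "real^'n \<Rightarrow> real^'n \<Rightarrow> real" +
  fixes br :: "real^'n \<Rightarrow> real^'n \<Rightarrow> real^'n"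
  assumes lie: "lie_algebra UNIV br" and nil: "nilpotent_lie UNIV br"
begin

lemma brbil: "bilinear br" and br_self: "br x x = 0"
  and jacobi: "br x (br y z) + br y (br z x) + br z (br x y) = 0"
  using lie unfolding lie_algebra_def by auto

lemma br_anti: "br x y = - br y x"
proof -
  have "br (x + y) (x + y) = 0" by (rule br_self)
  then have "br x x + br x y + br y x + br y y = 0"
    using brbil by (simp add: bilinear_ladd bilinear_radd algebra_simps)
  then show ?thesis by (simp add: br_self eq_neg_iff_add_eq_0)
qed

lemma lin_br1: "linear (br y)" using brbil unfolding bilinear_def by auto
lemma lin_br2: "linear (\<lambda>x. br x y)" using brbil unfolding bilinear_def by auto

abbreviation C :: "nat \<Rightarrow> (real^'n) set" where "C k \<equiv> lower_central UNIV br k"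

lemma C_sub: "subspace (C k)"
  by (cases k) (auto simp: subspace_UNIV subspace_span)

lemma C_br: "y \<in> C k \<Longrightarrow> br x y \<in> C (Suc k)"
  by (auto intro: span_base)

lemma C_br2: "x \<in> C k \<Longrightarrow> br x y \<in> C (Suc k)"
proof -
  assume "x \<in> C k"
  then have "br y x \<in> C (Suc k)" by (rule C_br)
  then have "- br y x \<in> C (Suc k)" using C_sub[of "Suc k"] by (simp add: subspace_neg)
  then show ?thesis using br_anti[of x y] by simp
qed

lemma C_dec: "C (Suc k) \<subseteq> C k"
proof (induction k)
  case 0 then show ?case by simp
next
  case (Suc k)
  have "{br x y |x y. x \<in> UNIV \<and> y \<in> C (Suc k)} \<subseteq> {br x y |x y. x \<in> UNIV \<and> y \<in> C k}"
    using Suc by blast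
  then show ?case by (simp only: lower_central.simps) (rule span_mono)
qed

lemma C_end: "\<exists>m. C m = {0}" using nil unfolding nilpotent_lie_def by blast

lemma tr_flag:
  assumes "linear f" "\<And>k x. x \<in> C k \<Longrightarrow> f x \<in> C (Suc k)"
  shows "tr f = 0"
proof -
  obtain m where "C m = {0}" using C_end by blast
  then have "trace_on UNIV f = 0"
    by (intro trace_on_flag[of C, OF C_sub C_dec _ _ linear_lin_on[OF assms(1)] assms(2)]) auto
  then show ?thesis using tr_eq_trace_on[OF assms(1)] by simp
qed

lemma deriv_C:
  assumes "is_derivation br Z" "x \<in> C k"
  shows "Z *v x \<in> C k"
  using assms(2)
proof (induction k arbitrary: x)
  case 0 then show ?case by simp
next
  case (Suc k)
  let ?G = "{br a b |a b. a \<in> UNIV \<and> b \<in> C k}"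
  have lin: "linear ((*v) Z)" by (simp add: matrix_vector_mul_linear)
  have "(*v) Z ` ?G \<subseteq> C (Suc k)"
  proof
    fix w assume "w \<in> (*v) Z ` ?G"
    then obtain a b where ab: "b \<in> C k" "w = Z *v br a b" by blast
    then have "w = br (Z *v a) b + br a (Z *v b)" using assms(1) unfolding is_derivation_def by simp
    moreover have "br (Z *v a) b \<in> C (Suc k)" using C_br ab by blast
    moreover have "br a (Z *v b) \<in> C (Suc k)" using C_br Suc.IH ab by blast
    ultimately show "w \<in> C (Suc k)" using C_sub[of "Suc k"] by (simp add: subspace_add)
  qed
  then have "span ((*v) Z ` ?G) \<subseteq> C (Suc k)"
    using C_sub[of "Suc k"] by (rule span_minimal)
  then have "(*v) Z ` span ?G \<subseteq> C (Suc k)" by (simp add: real_vector.linear_span_image[OF lin])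
  then show ?case using Suc.prems by auto
qed

definition K :: "real^'n \<Rightarrow> real^'n \<Rightarrow> real^'n" where
  "K a b = (\<Sum>i\<in>UNIV. B a (br b (E i)) *\<^sub>R F i)"

lemma K_B: "B (K a b) d = B a (br b d)"
proof -
  have "B (K a b) d = (\<Sum>i\<in>UNIV. B a (br b (E i)) * d $ i)"
    unfolding K_def by (simp add: bil_lsc[OF bil] BF)
  also have "\<dots> = B a (br b (\<Sum>i\<in>UNIV. d $ i *\<^sub>R E i))"
    by (simp add: linear_sum[OF lin_br1] linear_scale[OF lin_br1] o_def bil_rsc[OF bil] mult.commute)
  finally show ?thesis by (simp only: vec_expand)
qed

lemma K_B2: "B d (K a b) = B a (br b d)" using K_B[of a b d] sym[of d "K a b"] by simp

lemma K_bil: "bilinear K"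
  unfolding bilinear_def
proof (intro allI conjI)
  fix x
  show "linear (K x)"
    by (intro linearI; rule B_eqI) (simp_all add: K_B bilinear_ladd[OF brbil] bilinear_lmul[OF brbil]
          bilinear_radd[OF bil] bilinear_rmul[OF bil] bilinear_ladd[OF bil] bilinear_lmul[OF bil])
  show "linear (\<lambda>y. K y x)"
    by (intro linearI; rule B_eqI) (simp_all add: K_B bilinear_ladd[OF bil] bilinear_lmul[OF bil])
qed

definition nab :: "real^'n \<Rightarrow> real^'n \<Rightarrow> real^'n" where
  "nab a b = (1/2) *\<^sub>R (br a b - K a b - K b a)"

lemma nab_koszul: "B (nab a b) d = (B (br a b) d - B (br b d) a + B (br d a) b) / 2"
proof -
  have "B (nab a b) d = (1/2) * (B (br a b) d - B (K a b) d - B (K b a) d)"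
    unfolding nab_def by (simp add: bilinear_lmul[OF bil] bilinear_lsub[OF bil])
  also have "\<dots> = (1/2) * (B (br a b) d - B a (br b d) - B b (br a d))" by (simp add: K_B)
  also have "\<dots> = (B (br a b) d - B (br b d) a + B (br d a) b) / 2"
    using br_anti[of a d] sym[of a "br b d"] sym[of b "br d a"]
    by (simp add: bilinear_rneg[OF bil] bilinear_lneg[OF bil])
  finally show ?thesis .
qed

lemma lc_g: "levi_civita UNIV br B a b = nab a b"
  unfolding levi_civita_def
proof (rule the_equality)
  show "nab a b \<in> UNIV \<and> (\<forall>Z\<in>UNIV. B (nab a b) Z = (B (br a b) Z - B (br b Z) a + B (br Z a) b) / 2)"
    by (simp add: nab_koszul)
  fix W assume "W \<in> UNIV \<and> (\<forall>Z\<in>UNIV. B W Z = (B (br a b) Z - B (br b Z) a + B (br Z a) b) / 2)"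
  then show "W = nab a b" by (intro B_eqI) (simp add: nab_koszul)
qed

lemma nab_bil: "bilinear nab"
  unfolding bilinear_def
proof (intro allI conjI)
  fix x
  show "linear (nab x)"
    by (intro linearI) (simp_all add: nab_def bilinear_radd[OF brbil] bilinear_rmul[OF brbil]
        bilinear_radd[OF K_bil] bilinear_rmul[OF K_bil] bilinear_ladd[OF K_bil] bilinear_lmul[OF K_bil] algebra_simps)
  show "linear (\<lambda>y. nab y x)"
    by (intro linearI) (simp_all add: nab_def bilinear_ladd[OF brbil] bilinear_lmul[OF brbil]
        bilinear_radd[OF K_bil] bilinear_rmul[OF K_bil] bilinear_ladd[OF K_bil] bilinear_lmul[OF K_bil] algebra_simps)
qed

lemma lin_nab1: "linear (nab y)" using nab_bil unfolding bilinear_def by auto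
lemma lin_nab2: "linear (\<lambda>x. nab x y)" using nab_bil unfolding bilinear_def by auto
lemma lin_K1: "linear (K y)" using K_bil unfolding bilinear_def by auto
lemma lin_K2: "linear (\<lambda>x. K x y)" using K_bil unfolding bilinear_def by auto

lemma K_adj: "K a b = adj (br b) a"
  by (rule B_eqI2) (simp add: K_B2 adj_B[OF lin_br1] sym[of a])

lemma adj_K: "adj (K y) x = - K y x"
proof (rule adj_unique[OF lin_K1])
  fix a d
  show "B (K y a) d = B a (- K y d)"
    by (simp add: K_B bilinear_rneg[OF bil] K_B2 br_anti[of d a] bilinear_rneg[OF bil])
qed

lemma adj_adj: "linear f \<Longrightarrow> adj (adj f) x = f x"
proof (rule adj_unique[OF adj_linear])
  fix a b assume f: "linear f"
  show "B (adj f a) b = B a (f b)" by (rule adj_B2[OF f])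
qed

end

lemma bilinear_flip: "bilinear h \<Longrightarrow> bilinear (\<lambda>a b. h b a)"
  unfolding bilinear_def by auto

context glie begin

lemma bil_brw: "bilinear (\<lambda>a b. B (br a b) w)"
  unfolding bilinear_def
  by (auto intro!: linearI simp: bilinear_ladd[OF brbil] bilinear_lmul[OF brbil]
      bilinear_radd[OF brbil] bilinear_rmul[OF brbil] bilinear_ladd[OF bil] bilinear_lmul[OF bil])

lemma sum_half: "(\<Sum>i\<in>UNIV. (a i - b i + c i) / (2::real)) =
   ((\<Sum>i\<in>UNIV. a i) - (\<Sum>i\<in>UNIV. b i) + (\<Sum>i\<in>UNIV. c i)) / 2"
  by (simp add: sum_divide_distrib[symmetric] sum.distrib sum_subtractf)

lemma U3:
  assumes Y: "linear Y" "\<And>x y. B (Y x) y = B x (Y y)" "\<And>k x. x \<in> C k \<Longrightarrow> Y x \<in> C k"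
  shows "tr (\<lambda>p. nab (Y p) w) = 0"
proof -
  define a where "a = (\<Sum>i\<in>UNIV. B (br (Y (E i)) w) (F i))"
  define b where "b = (\<Sum>i\<in>UNIV. B (br w (F i)) (Y (E i)))"
  define c where "c = (\<Sum>i\<in>UNIV. B (br (F i) (Y (E i))) w)"
  have "tr (\<lambda>p. nab (Y p) w) = (a - b + c) / 2"
    unfolding tr_B nab_koszul a_def b_def c_def by (rule sum_half)
  moreover have "a = 0"
  proof -
    have "a = tr (\<lambda>p. br (Y p) w)" by (simp add: a_def tr_B)
    also have "\<dots> = 0"
      by (rule tr_flag) (rule linear_compose[OF Y(1) lin_br2, unfolded o_def], blast intro: C_br2 Y(3))
    finally show ?thesis .
  qed
  moreover have "b = 0"
  proof -
    have "b = (\<Sum>i\<in>UNIV. B (Y (E i)) (br w (F i)))" by (simp add: b_def sym)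
    also have "\<dots> = (\<Sum>i\<in>UNIV. B (Y (F i)) (br w (E i)))"
      using ctr_swap[OF bilinear_comp[OF bil Y(1) lin_br1]] by simp
    also have "\<dots> = (\<Sum>i\<in>UNIV. B (Y (br w (E i))) (F i))"
      by (simp add: Y(2) sym)
    also have "\<dots> = tr (\<lambda>p. Y (br w p))" by (simp add: tr_B)
    also have "\<dots> = 0"
      by (rule tr_flag) (rule linear_compose[OF lin_br1 Y(1), unfolded o_def], blast intro: C_br Y(3))
    finally show ?thesis .
  qed
  moreover have "c = 0"
  proof -
    have bf: "bilinear (\<lambda>a b. B (br b a) w)" by (rule bilinear_flip[OF bil_brw])
    have "c = (\<Sum>i\<in>UNIV. B (br (F i) (Y (E i))) w)" by (simp add: c_def)
    also have "\<dots> = (\<Sum>i\<in>UNIV. B (br (Y (F i)) (E i)) w)"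
      using ctr_selfadj[OF bf Y(1) Y(2)] by simp
    also have "\<dots> = (\<Sum>i\<in>UNIV. B (br (Y (E i)) (F i)) w)"
      using ctr_swap[OF bilinear_comp[OF bf linear_id Y(1)]] by simp
    also have "\<dots> = - c"
      by (simp add: c_def br_anti[of "Y _"] bilinear_lneg[OF bil] sum_negf)
    finally show ?thesis by simp
  qed
  ultimately show ?thesis by simp
qed

lemma U1: "tr (\<lambda>p. nab p w) = 0"
proof -
  have "linear (\<lambda>x::real^'n. x)" by (simp add: linear_iff)
  then show ?thesis using U3[of "\<lambda>x. x" w] by simp
qed

lemma U2:
  assumes Z: "linear Z" "\<And>x y. B (Z x) y = B x (Z y)" "\<And>k x. x \<in> C k \<Longrightarrow> Z x \<in> C k"
  shows "tr (\<lambda>p. nab v (Z p)) = 0"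
proof -
  define a where "a = (\<Sum>i\<in>UNIV. B (br v (Z (E i))) (F i))"
  define b where "b = (\<Sum>i\<in>UNIV. B (br (Z (E i)) (F i)) v)"
  define c where "c = (\<Sum>i\<in>UNIV. B (br (F i) v) (Z (E i)))"
  have "tr (\<lambda>p. nab v (Z p)) = (a - b + c) / 2"
    unfolding tr_B nab_koszul a_def b_def c_def by (rule sum_half)
  moreover have "a = 0"
  proof -
    have "a = tr (\<lambda>p. br v (Z p))" by (simp add: a_def tr_B)
    also have "\<dots> = 0"
      by (rule tr_flag) (rule linear_compose[OF Z(1) lin_br1, unfolded o_def], blast intro: C_br Z(3))
    finally show ?thesis .
  qed
  moreover have "b = 0"
  proof -
    have bf: "bilinear (\<lambda>a b. B (br a b) v)" by (rule bil_brw)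
    have "b = (\<Sum>i\<in>UNIV. B (br (E i) (Z (F i))) v)"
      unfolding b_def using ctr_selfadj[OF bf Z(1) Z(2)] by simp
    also have "\<dots> = (\<Sum>i\<in>UNIV. B (br (F i) (Z (E i))) v)"
      using ctr_swap[OF bilinear_comp[OF bf linear_id Z(1)]] by simp
    also have "\<dots> = - b"
      by (simp add: b_def br_anti[of "F _"] bilinear_lneg[OF bil] sum_negf)
    finally show ?thesis by simp
  qed
  moreover have "c = 0"
  proof -
    have "c = (\<Sum>i\<in>UNIV. B (E i) (Z (br (F i) v)))" by (simp add: c_def sym Z(2))
    also have "\<dots> = (\<Sum>i\<in>UNIV. B (F i) (Z (br (E i) v)))"
      using ctr_swap[OF bilinear_comp[OF bil linear_id linear_compose[OF lin_br2 Z(1), unfolded o_def]]]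
      by simp
    also have "\<dots> = tr (\<lambda>p. Z (br p v))" by (simp add: tr_B sym)
    also have "\<dots> = 0"
      by (rule tr_flag) (rule linear_compose[OF lin_br2 Z(1), unfolded o_def], blast intro: C_br2 Z(3))
    finally show ?thesis .
  qed
  ultimately show ?thesis by simp
qed

end

context glie begin

lemma tr_flag2: "tr (\<lambda>x. br y (br x z)) = 0"
proof (rule tr_flag[OF linear_compose[OF lin_br2 lin_br1, unfolded o_def]])
  fix k x assume "x \<in> C k"
  then have "br x z \<in> C (Suc k)" by (rule C_br2)
  then have "br y (br x z) \<in> C (Suc (Suc k))" by (rule C_br)
  then show "br y (br x z) \<in> C (Suc k)" using C_dec by blast
qed
lemma tr_flag3: "tr (\<lambda>x. br (br x y) z) = 0"
  by (rule tr_flag[OF linear_compose[OF lin_br2 lin_br2, unfolded o_def]]) (metis C_br2 C_dec subsetD)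
lemma tr_flag4: "tr (\<lambda>x. br z (br y x)) = 0"
  by (rule tr_flag[OF linear_compose[OF lin_br1 lin_br1, unfolded o_def]]) (metis C_br C_dec subsetD)

lemma T8: "tr (\<lambda>x. K (K x z) y) = 0"
proof -
  have "tr (\<lambda>x. K (K x z) y) = tr (\<lambda>x. adj (br y) (adj (br z) x))" by (simp add: K_adj)
  also have "\<dots> = tr (\<lambda>x. adj (adj (br z)) (br y x))" by (rule tr_adj_comp[OF lin_br1 adj_linear])
  also have "\<dots> = tr (\<lambda>x. br z (br y x))" by (simp add: adj_adj[OF lin_br1])
  finally show ?thesis using tr_flag4 by simp
qed

lemma T7: "tr (\<lambda>x. K (br x z) y) = - tr (\<lambda>x. br y (K x z))"
proof -
  have "\<And>x. K (br x z) y = - adj (br y) (br z x)"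
    by (simp add: K_adj br_anti[of _ z] linear_neg[OF adj_linear])
  then have "tr (\<lambda>x. K (br x z) y) = - tr (\<lambda>x. adj (br y) (br z x))" by (simp add: tr_neg)
  also have "tr (\<lambda>x. adj (br y) (br z x)) = tr (\<lambda>x. adj (br z) (br y x))"
    by (rule tr_adj_comp[OF lin_br1 lin_br1])
  also have "\<dots> = tr (\<lambda>x. br y (adj (br z) x))" by (rule tr_comp[OF adj_linear lin_br1])
  also have "\<dots> = tr (\<lambda>x. br y (K x z))" by (simp add: K_adj)
  finally show ?thesis .
qed

lemma T9: "tr (\<lambda>x. K (K z x) y) = - tr (\<lambda>x. br y (K z x))"
proof -
  have "tr (\<lambda>x. K (K z x) y) = tr (\<lambda>x. adj (br y) (K z x))" by (simp add: K_adj)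
  also have "\<dots> = tr (\<lambda>x. adj (K z) (br y x))" by (rule tr_adj_comp[OF lin_br1 lin_K1])
  also have "\<dots> = - tr (\<lambda>x. K z (br y x))" by (simp add: adj_K tr_neg)
  also have "tr (\<lambda>x. K z (br y x)) = tr (\<lambda>x. br y (K z x))" by (rule tr_comp[OF lin_K1 lin_br1])
  finally show ?thesis .
qed

lemma T5: "tr (\<lambda>x. K y (K x z)) = tr (\<lambda>x. K y (br x z))"
proof -
  have "tr (\<lambda>x. K y (K x z)) = tr (\<lambda>x. K y (adj (br z) x))" by (simp add: K_adj)
  also have "\<dots> = tr (\<lambda>x. adj (br z) (K y x))" by (rule tr_comp[OF lin_K1 adj_linear])
  also have "\<dots> = tr (\<lambda>x. adj (K y) (br z x))" by (rule tr_adj_comp[OF lin_br1 lin_K1])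
  also have "\<dots> = tr (\<lambda>x. - K y (br z x))" by (simp add: adj_K)
  also have "\<dots> = tr (\<lambda>x. K y (br x z))"
    by (simp add: br_anti[of _ z] linear_neg[OF lin_K1])
  finally show ?thesis .
qed

lemma R2: "tr (\<lambda>x. K (br x y) z) = - tr (\<lambda>x. adj (br z) (br y x))"
proof -
  have "\<And>x. K (br x y) z = - adj (br z) (br y x)"
    by (simp add: K_adj br_anti[of _ y] linear_neg[OF adj_linear])
  then show ?thesis by (simp add: tr_neg)
qed

lemma R3: "tr (\<lambda>x. K z (br x y)) = - tr (\<lambda>x. br y (K z x))"
proof -
  have "\<And>x. K z (br x y) = - K z (br y x)"
    by (simp add: br_anti[of _ y] linear_neg[OF lin_K1])
  then have "tr (\<lambda>x. K z (br x y)) = - tr (\<lambda>x. K z (br y x))" by (simp add: tr_neg)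
  also have "tr (\<lambda>x. K z (br y x)) = tr (\<lambda>x. br y (K z x))" by (rule tr_comp[OF lin_K1 lin_br1])
  finally show ?thesis .
qed

definition ric :: "real^'n \<Rightarrow> real^'n \<Rightarrow> real" where
  "ric y z = tr (\<lambda>x. nab x (nab y z) - nab y (nab x z) - nab (br x y) z)"

lemma nab_nab: "nab y (nab x z) = (1/4) *\<^sub>R (br y (br x z) - br y (K x z) - br y (K z x)
   - K y (br x z) + K y (K x z) + K y (K z x) - K (br x z) y + K (K x z) y + K (K z x) y)"
  unfolding nab_def
  by (simp add: bilinear_rmul[OF brbil] bilinear_rsub[OF brbil] bilinear_rmul[OF K_bil]
      bilinear_rsub[OF K_bil] bilinear_lmul[OF K_bil] bilinear_lsub[OF K_bil]
      bilinear_radd[OF brbil] bilinear_radd[OF K_bil] bilinear_ladd[OF K_bil] algebra_simps)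

lemma nab_br: "nab (br x y) z = (1/2) *\<^sub>R (br (br x y) z - K (br x y) z - K z (br x y))"
  by (simp add: nab_def)

lemma ric_formula: "ric y z = -(1/4) * tr (\<lambda>x. K y (K z x)) - (1/2) * tr (\<lambda>x. adj (br z) (br y x))"
proof -
  have "ric y z = tr (\<lambda>x. nab x (nab y z)) - tr (\<lambda>x. nab y (nab x z)) - tr (\<lambda>x. nab (br x y) z)"
    by (simp add: ric_def tr_diff)
  also have "tr (\<lambda>x. nab x (nab y z)) = 0" by (rule U1)
  also have "tr (\<lambda>x. nab y (nab x z)) = (1/4) * (tr (\<lambda>x. br y (br x z)) - tr (\<lambda>x. br y (K x z))
      - tr (\<lambda>x. br y (K z x)) - tr (\<lambda>x. K y (br x z)) + tr (\<lambda>x. K y (K x z)) + tr (\<lambda>x. K y (K z x))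
      - tr (\<lambda>x. K (br x z) y) + tr (\<lambda>x. K (K x z) y) + tr (\<lambda>x. K (K z x) y))"
    by (simp only: nab_nab tr_scale tr_add tr_diff)
  also have "tr (\<lambda>x. nab (br x y) z) = (1/2) * (tr (\<lambda>x. br (br x y) z) - tr (\<lambda>x. K (br x y) z)
      - tr (\<lambda>x. K z (br x y)))"
    by (simp only: nab_br tr_scale tr_add tr_diff)
  finally have *: "ric y z = 0 - (1/4) * (tr (\<lambda>x. br y (br x z)) - tr (\<lambda>x. br y (K x z))
      - tr (\<lambda>x. br y (K z x)) - tr (\<lambda>x. K y (br x z)) + tr (\<lambda>x. K y (K x z)) + tr (\<lambda>x. K y (K z x))
      - tr (\<lambda>x. K (br x z) y) + tr (\<lambda>x. K (K x z) y) + tr (\<lambda>x. K (K z x) y))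
      - (1/2) * (tr (\<lambda>x. br (br x y) z) - tr (\<lambda>x. K (br x y) z) - tr (\<lambda>x. K z (br x y)))" .
  show ?thesis
    apply (subst *)
    apply (simp only: tr_flag2[where y=y and z=z] tr_flag3[where y=y and z=z] T8[where y=y and z=z]
      T7[where y=y and z=z] T9[where y=y and z=z] T5[where y=y and z=z]
      R2[where y=y and z=z] R3[where y=y and z=z])
    apply (simp add: algebra_simps)
    done
qed

end

context glie begin

lemma Q_sum: "tr (\<lambda>x. adj (br z) (br y x)) = (\<Sum>i\<in>UNIV. B (br y (E i)) (br z (F i)))"
  by (simp add: tr_B adj_B2[OF lin_br1])

lemma K_expand: "K z a = (\<Sum>j\<in>UNIV. B z (br a (E j)) *\<^sub>R F j)"
  by (simp add: K_def)

lemma T6_sum: "tr (\<lambda>x. K y (K z x)) = (\<Sum>i\<in>UNIV. \<Sum>j\<in>UNIV. B z (br (E i) (E j)) * B y (br (F j) (F i)))"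
proof -
  have "tr (\<lambda>x. K y (K z x)) = (\<Sum>i\<in>UNIV. B y (br (K z (E i)) (F i)))"
    by (simp add: tr_B K_B)
  also have "\<dots> = (\<Sum>i\<in>UNIV. \<Sum>j\<in>UNIV. B z (br (E i) (E j)) * B y (br (F j) (F i)))"
  proof (intro sum.cong refl)
    fix i
    have "br (K z (E i)) (F i) = (\<Sum>j\<in>UNIV. B z (br (E i) (E j)) *\<^sub>R br (F j) (F i))"
      unfolding K_expand by (simp add: linear_sum[OF lin_br2] linear_scale[OF lin_br2] o_def)
    then show "B y (br (K z (E i)) (F i)) = (\<Sum>j\<in>UNIV. B z (br (E i) (E j)) * B y (br (F j) (F i)))"
      by (simp add: bil_rsc[OF bil])
  qed
  finally show ?thesis .
qed

lemma ric_trace_zero: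
  assumes S: "linear S" "\<And>a b. S (br a b) = br (S a) b + br a (S b)"
  shows "(\<Sum>k\<in>UNIV. ric (S (E k)) (F k)) = 0"
proof -
  define X where "X = (\<Sum>i\<in>UNIV. \<Sum>j\<in>UNIV. B (br (S (E i)) (E j)) (br (F i) (F j)))"
  have 1: "(\<Sum>k\<in>UNIV. tr (\<lambda>x. adj (br (F k)) (br (S (E k)) x))) = X"
    by (simp add: Q_sum X_def)
  have "(\<Sum>k\<in>UNIV. tr (\<lambda>x. K (S (E k)) (K (F k) x)))
      = (\<Sum>k\<in>UNIV. \<Sum>i\<in>UNIV. \<Sum>j\<in>UNIV. br (E i) (E j) $ k * B (S (E k)) (br (F j) (F i)))"
    by (simp add: T6_sum BF)
  also have "\<dots> = (\<Sum>i\<in>UNIV. \<Sum>j\<in>UNIV. \<Sum>k\<in>UNIV. br (E i) (E j) $ k * B (S (E k)) (br (F j) (F i)))"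
    by (subst sum.swap, subst (2) sum.swap, rule refl)
  also have "\<dots> = (\<Sum>i\<in>UNIV. \<Sum>j\<in>UNIV. B (S (br (E i) (E j))) (br (F j) (F i)))"
  proof (intro sum.cong refl)
    fix i j
    show "(\<Sum>k\<in>UNIV. br (E i) (E j) $ k * B (S (E k)) (br (F j) (F i))) = B (S (br (E i) (E j))) (br (F j) (F i))"
      by (subst (2) linear_expand[OF S(1)]) (simp add: bil_lsc[OF bil])
  qed
  also have "\<dots> = (\<Sum>i\<in>UNIV. \<Sum>j\<in>UNIV. B (br (S (E i)) (E j)) (br (F j) (F i)))
               + (\<Sum>i\<in>UNIV. \<Sum>j\<in>UNIV. B (br (E i) (S (E j))) (br (F j) (F i)))"
    by (simp add: S(2) bilinear_ladd[OF bil] sum.distrib)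
  also have "(\<Sum>i\<in>UNIV. \<Sum>j\<in>UNIV. B (br (S (E i)) (E j)) (br (F j) (F i))) = - X"
  proof -
    have "(\<Sum>i\<in>UNIV. \<Sum>j\<in>UNIV. B (br (S (E i)) (E j)) (br (F j) (F i)))
       = (\<Sum>i\<in>UNIV. \<Sum>j\<in>UNIV. - B (br (S (E i)) (E j)) (br (F i) (F j)))"
    proof (intro sum.cong refl)
      fix i j
      show "B (br (S (E i)) (E j)) (br (F j) (F i)) = - B (br (S (E i)) (E j)) (br (F i) (F j))"
        using br_anti[of "F j" "F i"] by (simp add: bilinear_rneg[OF bil])
    qed
    then show ?thesis unfolding X_def by (simp add: sum_negf)
  qed
  also have "(\<Sum>i\<in>UNIV. \<Sum>j\<in>UNIV. B (br (E i) (S (E j))) (br (F j) (F i))) = - X"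
  proof -
    have "(\<Sum>i\<in>UNIV. \<Sum>j\<in>UNIV. B (br (E i) (S (E j))) (br (F j) (F i)))
        = (\<Sum>j\<in>UNIV. \<Sum>i\<in>UNIV. B (br (E i) (S (E j))) (br (F j) (F i)))"
      by (rule sum.swap)
    also have "\<dots> = (\<Sum>j\<in>UNIV. \<Sum>i\<in>UNIV. - B (br (S (E j)) (E i)) (br (F j) (F i)))"
    proof (intro sum.cong refl)
      fix j i
      show "B (br (E i) (S (E j))) (br (F j) (F i)) = - B (br (S (E j)) (E i)) (br (F j) (F i))"
        using br_anti[of "E i" "S (E j)"] by (simp add: bilinear_lneg[OF bil])
    qed
    finally show ?thesis unfolding X_def by (simp add: sum_negf)
  qed
  finally have 2: "(\<Sum>k\<in>UNIV. tr (\<lambda>x. K (S (E k)) (K (F k) x))) = - X + - X" .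
  have "(\<Sum>k\<in>UNIV. ric (S (E k)) (F k)) =
     -(1/4) * (\<Sum>k\<in>UNIV. tr (\<lambda>x. K (S (E k)) (K (F k) x))) - (1/2) * (\<Sum>k\<in>UNIV. tr (\<lambda>x. adj (br (F k)) (br (S (E k)) x)))"
    by (simp add: ric_formula sum_subtractf sum_distrib_left)
  also have "\<dots> = 0" by (simp add: 1 2)
  finally show ?thesis .
qed

end

context glie begin

lemma lin_curv: "linear (\<lambda>x. nab x (nab y z) - nab y (nab x z) - nab (br x y) z)"
  by (intro linear_compose_sub lin_nab2 linear_compose[OF lin_nab2 lin_nab1, unfolded o_def]
      linear_compose[OF lin_br2 lin_nab2, unfolded o_def])

lemma ricci_form_g: "ricci_form UNIV br B y z = ric y z"
  unfolding ricci_form_def curvature_def lc_g ric_def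
  by (rule trace_on_UNIV[OF lin_curv])

lemma ric_lin: "lin_on UNIV (ric y)"
proof -
  have eq: "ric y z = -(1/4) * (\<Sum>i\<in>UNIV. \<Sum>j\<in>UNIV. B z (br (E i) (E j)) * B y (br (F j) (F i)))
     - (1/2) * (\<Sum>i\<in>UNIV. B (br y (E i)) (br z (F i)))" for z
    by (simp only: ric_formula T6_sum Q_sum)
  show ?thesis
    unfolding lin_on_def eq
    by (simp add: bilinear_ladd[OF bil] bilinear_lmul[OF bil] bilinear_radd[OF bil] bilinear_rmul[OF bil]
        bilinear_ladd[OF brbil] bilinear_lmul[OF brbil] bilinear_radd[OF brbil] bilinear_rmul[OF brbil]
        sum.distrib sum_distrib_left algebra_simps)
qed

lemma ricci_op_g:
  assumes "ricci_op UNIV br B v = W"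
  shows "B W z = ric v z"
proof -
  have "\<exists>W0\<in>UNIV. \<forall>x\<in>UNIV. B W0 x = ric v x"
    by (rule riesz[OF subspace_UNIV bil _ _ ric_lin]) (auto simp: sym intro: nd)
  then obtain W0 where W0: "\<forall>x. B W0 x = ric v x" by auto
  have "ricci_op UNIV br B v = W0"
    unfolding ricci_op_def ricci_form_g
  proof (rule the_equality)
    show "W0 \<in> UNIV \<and> (\<forall>Z\<in>UNIV. B W0 Z = ric v Z)" using W0 by simp
    fix W1 assume "W1 \<in> UNIV \<and> (\<forall>Z\<in>UNIV. B W1 Z = ric v Z)"
    then show "W1 = W0" using W0 by (intro B_eqI) simp
  qed
  then show ?thesis using assms W0 by simp
qed

lemma trace_identity:
  assumes ric: "\<forall>v. ricci_op UNIV br B v = lam *\<^sub>R v + D *v v"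
    and S: "is_derivation br S"
  shows "lam * trace S + trace (D ** S) = 0"
proof -
  have linS: "linear ((*v) S)" by (simp add: matrix_vector_mul_linear)
  have "(\<Sum>k\<in>UNIV. ric (S *v E k) (F k)) = 0"
    by (rule ric_trace_zero[OF linS]) (use S in \<open>simp add: is_derivation_def\<close>)
  moreover have "ric (S *v E k) (F k) = B (lam *\<^sub>R (S *v E k) + D *v (S *v E k)) (F k)" for k
    using ricci_op_g[of "S *v E k"] ric by simp
  ultimately have "tr (\<lambda>x. lam *\<^sub>R (S *v x) + D *v (S *v x)) = 0"
    by (simp add: tr_B)
  then have "lam * tr (\<lambda>x. S *v x) + tr (\<lambda>x. (D ** S) *v x) = 0"
    by (simp add: tr_add tr_scale matrix_vector_mul_assoc)
  then show ?thesis by (simp add: tr_matrix)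
qed

end

lemma mm_add_r: "((X::real^'n^'n) + Y) ** Z = X ** Z + Y ** Z"
  by (simp add: matrix_matrix_mult_def vec_eq_iff sum.distrib algebra_simps)
lemma mm_scale_l: "((c::real) *\<^sub>R (X::real^'n^'n)) ** Y = c *\<^sub>R (X ** Y)"
  by (simp add: matrix_matrix_mult_def vec_eq_iff sum_distrib_left algebra_simps)
lemma mm_diff_r: "((X::real^'n^'n) - Y) ** Z = X ** Z - Y ** Z"
  by (simp add: matrix_matrix_mult_def vec_eq_iff sum_subtractf algebra_simps)
lemma mm_diff_l: "(Z::real^'n^'n) ** (X - Y) = Z ** X - Z ** Y"
  by (simp add: matrix_matrix_mult_def vec_eq_iff sum_subtractf algebra_simps)
lemma trace_scale: "trace ((c::real) *\<^sub>R (X::real^'n^'n)) = c * trace X"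
  by (simp add: trace_def sum_distrib_left)
lemma mv_scale_l: "((c::real) *\<^sub>R (X::real^'n^'n)) *v v = c *\<^sub>R (X *v v)"
  by (simp add: matrix_vector_mult_def vec_eq_iff sum_distrib_left algebra_simps)
lemma mv_sum_l: "(\<Sum>i\<in>I. f i :: real^'n^'n) *v v = (\<Sum>i\<in>I. f i *v v)"
  by (induction I rule: infinite_finite_induct) (auto simp: matrix_vector_mult_add_rdistrib)

locale sd = glie B br for B :: "real^'n \<Rightarrow> real^'n \<Rightarrow> real" and br +
  fixes lam :: real and D :: "real^'n^'n" and A :: "(real^'n^'n) set"
  assumes lam: "lam \<noteq> 0"
    and Dder: "is_derivation br D"
    and ric: "\<forall>v. ricci_op UNIV br B v = lam *\<^sub>R v + D *v v"
    and Asub: "subspace A"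
    and Alie: "\<forall>X\<in>A. \<forall>Y\<in>A. X ** Y - Y ** X \<in> A"
    and Ader: "\<forall>X\<in>A. is_derivation br X"
    and Aself: "\<forall>X\<in>A. self_adjoint_wrt B X"
    and DA: "D \<in> A"
    and Anondeg: "\<forall>X\<in>A. (\<forall>Y\<in>A. trace (X ** Y) = 0) \<longrightarrow> X = 0"
begin

lemma selfadj: "X \<in> A \<Longrightarrow> B (X *v x) y = B x (X *v y)"
  using Aself unfolding self_adjoint_wrt_def by blast

lemma deriv: "X \<in> A \<Longrightarrow> X *v br a b = br (X *v a) b + br a (X *v b)"
  using Ader unfolding is_derivation_def by blast

lemma A_comm: assumes "X \<in> A" "Y \<in> A" shows "X ** Y = Y ** X"
proof -
  let ?C = "X ** Y - Y ** X"
  have CA: "?C \<in> A" using Alie assms by blast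
  have "B x (?C *v y) = 0" for x y
  proof -
    have "B x (?C *v y) = B (?C *v x) y" using selfadj[OF CA] by simp
    also have "\<dots> = B (X *v (Y *v x)) y - B (Y *v (X *v x)) y"
      by (simp add: matrix_vector_mult_diff_rdistrib matrix_vector_mul_assoc[symmetric] bilinear_lsub[OF bil])
    also have "\<dots> = B x (Y *v (X *v y)) - B x (X *v (Y *v y))"
      using selfadj[OF assms(1)] selfadj[OF assms(2)] by simp
    also have "\<dots> = - B x (?C *v y)"
      by (simp add: matrix_vector_mult_diff_rdistrib matrix_vector_mul_assoc[symmetric] bilinear_rsub[OF bil])
    finally show ?thesis by simp
  qed
  then have "B (?C *v y) x = 0" for x y using sym[of "?C *v y" x] by simp
  then have "?C *v y = 0" for y using nd by blast
  then have "?C = 0" by (simp add: matrix_eq)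
  then show ?thesis by simp
qed

definition tf :: "real^'n^'n \<Rightarrow> real^'n^'n \<Rightarrow> real" where
  "tf X Y = -(1/lam) * trace (X ** Y)"

lemma trace_mm: "trace ((X::real^'n^'n) ** Y) = (\<Sum>i\<in>UNIV. \<Sum>j\<in>UNIV. X $ i $ j * Y $ j $ i)"
  by (simp add: trace_def matrix_matrix_mult_def)

lemma tf_bil: "bilinear tf"
  unfolding bilinear_def tf_def trace_mm
  by (intro conjI allI linearI) (simp_all add: sum.distrib sum_distrib_left algebra_simps)

lemma tf_sym: "tf X Y = tf Y X"
  unfolding tf_def by (subst trace_mul_sym) (rule refl)

lemma tf_nd: "X \<in> A \<Longrightarrow> (\<forall>Y\<in>A. tf X Y = 0) \<Longrightarrow> X = 0"
proof -
  assume a: "X \<in> A" "\<forall>Y\<in>A. tf X Y = 0"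
  then have "\<forall>Y\<in>A. trace (X ** Y) = 0" using lam by (simp add: tf_def)
  then show "X = 0" using Anondeg a(1) by blast
qed

lemma tf_eqI: "X \<in> A \<Longrightarrow> X' \<in> A \<Longrightarrow> (\<And>Z. Z \<in> A \<Longrightarrow> tf X Z = tf X' Z) \<Longrightarrow> X = X'"
proof -
  assume a: "X \<in> A" "X' \<in> A" "\<And>Z. Z \<in> A \<Longrightarrow> tf X Z = tf X' Z"
  have "X - X' \<in> A" using a Asub by (simp add: subspace_diff)
  moreover have "\<forall>Z\<in>A. tf (X - X') Z = 0" using a by (simp add: bilinear_lsub[OF tf_bil])
  ultimately have "X - X' = 0" using tf_nd by blast
  then show "X = X'" by simp
qed

definition sig :: "real^'n \<Rightarrow> real^'n \<Rightarrow> real^'n^'n" where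
  "sig u v = (SOME S. S \<in> A \<and> (\<forall>Z\<in>A. tf S Z = B (Z *v u) v))"

lemma sig_ex: "\<exists>S. S \<in> A \<and> (\<forall>Z\<in>A. tf S Z = B (Z *v u) v)"
proof -
  have l: "lin_on A (\<lambda>Z. B (Z *v u) v)"
    by (simp add: lin_on_def matrix_vector_mult_add_rdistrib mv_scale_l bilinear_ladd[OF bil] bilinear_lmul[OF bil])
  have "\<exists>S\<in>A. \<forall>Z\<in>A. tf S Z = B (Z *v u) v"
    by (rule riesz[OF Asub tf_bil _ _ l]) (auto simp: tf_sym intro: tf_nd)
  then show ?thesis by blast
qed

lemma sig_A: "sig u v \<in> A" and sig_prop: "Z \<in> A \<Longrightarrow> tf (sig u v) Z = B (Z *v u) v"
  using someI_ex[OF sig_ex[of u v]] unfolding sig_def[symmetric] by auto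

lemma sig_unique: "S \<in> A \<Longrightarrow> (\<And>Z. Z \<in> A \<Longrightarrow> tf S Z = B (Z *v u) v) \<Longrightarrow> sig u v = S"
  by (rule tf_eqI[OF sig_A]) (auto simp: sig_prop)

lemma sig_bil: "bilinear sig"
  unfolding bilinear_def
proof (intro allI conjI linearI)
  fix x y z :: "real^'n" and c :: real
  show "sig x (y + z) = sig x y + sig x z"
    by (rule sig_unique) (auto simp: Asub subspace_add sig_A bilinear_ladd[OF tf_bil] sig_prop bilinear_radd[OF bil])
  show "sig x (c *\<^sub>R y) = c *\<^sub>R sig x y"
    by (rule sig_unique) (auto simp: Asub subspace_scale sig_A bilinear_lmul[OF tf_bil] sig_prop bilinear_rmul[OF bil])
  show "sig (y + z) x = sig y x + sig z x"
    by (rule sig_unique) (auto simp: Asub subspace_add sig_A bilinear_ladd[OF tf_bil] sig_prop bilinear_ladd[OF bil]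
        matrix_vector_right_distrib)
  show "sig (c *\<^sub>R y) x = c *\<^sub>R sig y x"
    by (rule sig_unique) (auto simp: Asub subspace_scale sig_A bilinear_lmul[OF tf_bil] sig_prop bilinear_lmul[OF bil]
        matrix_scaleR_vector_ac mv_scale_l)
qed

lemma trace_sig: "trace (sig v w) = B (D *v v) w"
proof -
  have "lam * trace (sig v w) + trace (D ** sig v w) = 0"
    by (rule trace_identity[OF ric]) (use Ader sig_A in blast)
  moreover have "tf (sig v w) D = B (D *v v) w" by (rule sig_prop[OF DA])
  ultimately have h: "trace (sig v w ** D) + lam * trace (sig v w) = 0"
      "- trace (sig v w ** D) = lam * B (D *v v) w" using lam
    by (simp_all add: tf_def trace_mul_sym[of D] field_simps)
  then have "lam * trace (sig v w) = lam * B (D *v v) w" by linarith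
  then show ?thesis using lam by simp
qed

end

context sd begin

abbreviation Vt :: "((real^'n) \<times> (real^'n^'n)) set" where "Vt \<equiv> UNIV \<times> A"

definition nabt :: "(real^'n) \<times> (real^'n^'n) \<Rightarrow> (real^'n) \<times> (real^'n^'n) \<Rightarrow> (real^'n) \<times> (real^'n^'n)" where
  "nabt P Q = (nab (fst P) (fst Q) - snd Q *v fst P, sig (fst P) (fst Q))"

lemma Vt_sub: "subspace Vt"
  using Asub by (simp add: subspace_Times subspace_UNIV)

lemma nabt_V: "nabt P Q \<in> Vt" by (simp add: nabt_def sig_A)

lemma brt_V: "P \<in> Vt \<Longrightarrow> Q \<in> Vt \<Longrightarrow> sd_bracket br P Q \<in> Vt"
  using Alie by (auto simp: sd_bracket_def)

lemma brt_pair: "X \<in> A \<Longrightarrow> Y \<in> A \<Longrightarrow> sd_bracket br (u, X) (v, Y) = (br u v + X *v v - Y *v u, 0)"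
  by (simp add: sd_bracket_def A_comm)

lemma gt_pair: "sd_metric B lam (u, X) (v, Y) = B u v + tf X Y"
  by (simp add: sd_metric_def tf_def)

lemma nabt_koszul:
  assumes "P \<in> Vt" "Q \<in> Vt" "R \<in> Vt"
  shows "sd_metric B lam (nabt P Q) R = (sd_metric B lam (sd_bracket br P Q) R
     - sd_metric B lam (sd_bracket br Q R) P + sd_metric B lam (sd_bracket br R P) Q) / 2"
proof -
  obtain u X where P: "P = (u, X)" "X \<in> A" using assms(1) by auto
  obtain v Y where Q: "Q = (v, Y)" "Y \<in> A" using assms(2) by auto
  obtain w Z where R: "R = (w, Z)" "Z \<in> A" using assms(3) by auto
  have tf0: "tf 0 M = 0" for M by (simp add: tf_def trace_def)
  have lhs: "sd_metric B lam (nabt P Q) R = B (nab u v) w - B (Y *v u) w + B (Z *v u) v"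
    using P Q R by (simp add: nabt_def gt_pair sig_prop bilinear_lsub[OF bil])
  have rhs: "(sd_metric B lam (sd_bracket br P Q) R
     - sd_metric B lam (sd_bracket br Q R) P + sd_metric B lam (sd_bracket br R P) Q) / 2
     = (B (br u v) w + B (X *v v) w - B (Y *v u) w
        - (B (br v w) u + B (Y *v w) u - B (Z *v v) u)
        + (B (br w u) v + B (Z *v u) v - B (X *v w) v)) / 2"
    using P Q R by (simp add: brt_pair gt_pair tf0 bilinear_ladd[OF bil] bilinear_lsub[OF bil])
  have s1: "B (X *v v) w = B (X *v w) v" using selfadj[OF P(2), of v w] sym[of v "X *v w"] by simp
  have s2: "B (Y *v w) u = B (Y *v u) w" using selfadj[OF Q(2), of w u] sym[of w "Y *v u"] by simp
  have s3: "B (Z *v v) u = B (Z *v u) v" using selfadj[OF R(2), of v u] sym[of v "Z *v u"] by simp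
  show ?thesis unfolding lhs rhs nab_koszul using s1 s2 s3 by simp
qed

lemma gt_bil: "bilinear (sd_metric B lam)"
  unfolding bilinear_def sd_metric_def trace_mm
  by (intro conjI allI linearI)
     (simp_all add: bilinear_ladd[OF bil] bilinear_lmul[OF bil] bilinear_radd[OF bil] bilinear_rmul[OF bil]
       sum.distrib sum_distrib_left algebra_simps)

lemma gt_nd: "W \<in> Vt \<Longrightarrow> (\<forall>Z\<in>Vt. sd_metric B lam W Z = 0) \<Longrightarrow> W = 0"
proof -
  assume W: "W \<in> Vt" "\<forall>Z\<in>Vt. sd_metric B lam W Z = 0"
  obtain a M where aM: "W = (a, M)" "M \<in> A" using W(1) by auto
  have "B a b = 0" for b using W(2)[rule_format, of "(b, 0)"] aM Asub by (simp add: gt_pair tf_def subspace_0 trace_def)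
  then have a0: "a = 0" using nd by blast
  have "tf M N = 0" if "N \<in> A" for N using W(2)[rule_format, of "(0, N)"] aM that
    by (simp add: gt_pair bilinear_rzero[OF bil])
  then have "M = 0" using tf_nd aM by blast
  then show "W = 0" using a0 aM by (simp add: zero_prod_def)
qed

lemma gt_eqI: "W \<in> Vt \<Longrightarrow> W' \<in> Vt \<Longrightarrow> (\<And>Z. Z \<in> Vt \<Longrightarrow> sd_metric B lam W Z = sd_metric B lam W' Z) \<Longrightarrow> W = W'"
proof -
  assume a: "W \<in> Vt" "W' \<in> Vt" "\<And>Z. Z \<in> Vt \<Longrightarrow> sd_metric B lam W Z = sd_metric B lam W' Z"
  have "W - W' \<in> Vt" using a(1,2) Vt_sub by (rule_tac subspace_diff) auto
  moreover have "\<forall>Z\<in>Vt. sd_metric B lam (W - W') Z = 0"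
  proof
    fix Z assume "Z \<in> Vt"
    then have "sd_metric B lam W Z = sd_metric B lam W' Z" by (rule a(3))
    then show "sd_metric B lam (W - W') Z = 0" by (simp only: bilinear_lsub[OF gt_bil] diff_self)
  qed
  ultimately have "W - W' = 0" by (rule gt_nd)
  then show "W = W'" by simp
qed

lemma lc_t:
  assumes PQ: "P \<in> Vt" "Q \<in> Vt"
  shows "levi_civita Vt (sd_bracket br) (sd_metric B lam) P Q = nabt P Q"
proof -
  let ?K = "\<lambda>Z. (sd_metric B lam (sd_bracket br P Q) Z
     - sd_metric B lam (sd_bracket br Q Z) P + sd_metric B lam (sd_bracket br Z P) Q) / 2"
  have k: "\<forall>Z\<in>Vt. sd_metric B lam (nabt P Q) Z = ?K Z"
    using nabt_koszul[OF PQ] by blast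
  show ?thesis
    unfolding levi_civita_def
  proof (rule the_equality)
    show "nabt P Q \<in> Vt \<and> (\<forall>Z\<in>Vt. sd_metric B lam (nabt P Q) Z = ?K Z)"
      using nabt_V k by blast
    fix W assume W: "W \<in> Vt \<and> (\<forall>Z\<in>Vt. sd_metric B lam W Z = ?K Z)"
    show "W = nabt P Q"
    proof (rule gt_eqI)
      show "W \<in> Vt" using W by blast
      show "nabt P Q \<in> Vt" by (rule nabt_V)
      fix Z assume "Z \<in> Vt"
      then have 1: "sd_metric B lam W Z = ?K Z" using W by blast
      have 2: "sd_metric B lam (nabt P Q) Z = ?K Z" using k \<open>Z \<in> Vt\<close> by blast
      show "sd_metric B lam W Z = sd_metric B lam (nabt P Q) Z" by (simp only: 1 2)
    qed
  qed
qed

end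

lemma trace_frame2:
  assumes V: "subspace V" and f: "lin_on V f" "\<And>x. x \<in> V \<Longrightarrow> f x \<in> V"
    and I: "finite I" and J: "finite J"
    and c: "\<And>i. i \<in> I \<Longrightarrow> c i \<in> V" and d: "\<And>j. j \<in> J \<Longrightarrow> d j \<in> V"
    and phi: "\<And>i. i \<in> I \<Longrightarrow> lin_on V (\<phi> i)"
    and psi: "\<And>j. j \<in> J \<Longrightarrow> lin_on V (\<psi> j)"
    and exp: "\<And>x. x \<in> V \<Longrightarrow> x = (\<Sum>i\<in>I. \<phi> i x *\<^sub>R c i) + (\<Sum>j\<in>J. \<psi> j x *\<^sub>R d j)"
  shows "trace_on V f = (\<Sum>i\<in>I. \<phi> i (f (c i))) + (\<Sum>j\<in>J. \<psi> j (f (d j)))"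
proof -
  let ?c = "case_sum c d" and ?p = "case_sum \<phi> \<psi>"
  have "trace_on V f = (\<Sum>k\<in>I <+> J. ?p k (f (?c k)))"
  proof (rule trace_frame[OF V f])
    show "finite (I <+> J)" using I J by simp
    show "?c k \<in> V" if "k \<in> I <+> J" for k using that c d by auto
    show "lin_on V (?p k)" if "k \<in> I <+> J" for k using that phi psi by auto
    show "x = (\<Sum>k\<in>I <+> J. ?p k x *\<^sub>R ?c k)" if "x \<in> V" for x
      using exp[OF that] by (simp add: sum.Plus[OF I J] o_def)
  qed
  also have "\<dots> = (\<Sum>i\<in>I. \<phi> i (f (c i))) + (\<Sum>j\<in>J. \<psi> j (f (d j)))"
    by (simp add: sum.Plus[OF I J] o_def)
  finally show ?thesis .
qed

context sd begin

definition Rt where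
  "Rt P Q R = nabt P (nabt Q R) - nabt Q (nabt P R) - nabt (sd_bracket br P Q) R"

lemma curv_t: "P \<in> Vt \<Longrightarrow> Q \<in> Vt \<Longrightarrow> R \<in> Vt \<Longrightarrow>
   curvature Vt (sd_bracket br) (sd_metric B lam) P Q R = Rt P Q R"
  unfolding curvature_def Rt_def
  by (simp add: lc_t nabt_V brt_V)

lemma nabt_lin1: "linear (\<lambda>P. nabt P Q)"
  by (intro linearI)
     (simp_all add: nabt_def bilinear_ladd[OF nab_bil] bilinear_lmul[OF nab_bil]
       bilinear_ladd[OF sig_bil] bilinear_lmul[OF sig_bil] matrix_vector_right_distrib
       matrix_scaleR_vector_ac mv_scale_l algebra_simps)

lemma nabt_lin2: "linear (nabt P)"
  by (intro linearI)
     (simp_all add: nabt_def bilinear_radd[OF nab_bil] bilinear_rmul[OF nab_bil]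
       bilinear_radd[OF sig_bil] bilinear_rmul[OF sig_bil] matrix_vector_mult_add_rdistrib
       mv_scale_l algebra_simps)

lemma brt_lin1: "linear (\<lambda>P. sd_bracket br P Q)"
  by (intro linearI)
     (simp_all add: sd_bracket_def bilinear_ladd[OF brbil] bilinear_lmul[OF brbil]
       matrix_vector_right_distrib matrix_vector_mult_add_rdistrib mv_scale_l
       matrix_scaleR_vector_ac mm_add_r mm_scale_l matrix_add_ldistrib
       matrix_scalar_ac algebra_simps)

lemma Rt_lin: "linear (\<lambda>P. Rt P Q R)"
  unfolding Rt_def
  by (intro linear_compose_sub linear_compose[OF nabt_lin1 nabt_lin2, unfolded o_def]
      linear_compose[OF brt_lin1 nabt_lin1, unfolded o_def] nabt_lin1)

end

context sd begin

abbreviation SA where "SA \<equiv> basis_of A"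

lemma SA_props: "SA \<subseteq> A" "independent SA" "span SA = A" "finite SA"
  using basis_of_props[OF Asub] by auto

lemma Rt_g: "fst (Rt (p, 0) (v, Y) (w, Z)) =
   (nab p (nab v w) - nab v (nab p w) - nab (br p v) w) - nab p (Z *v v) - sig v w *v p
   + nab v (Z *v p) + sig p w *v v + nab (Y *v p) w + Z *v br p v - Z *v (Y *v p)"
  by (simp add: Rt_def nabt_def sd_bracket_def bilinear_rsub[OF nab_bil] bilinear_lsub[OF nab_bil]
      bilinear_rsub[OF sig_bil] bilinear_lsub[OF sig_bil] matrix_vector_right_distrib
      matrix_vector_mult_diff_rdistrib matrix_vector_mult_diff_distrib algebra_simps)

lemma Rt_a: "X \<in> A \<Longrightarrow> Y \<in> A \<Longrightarrow> snd (Rt (0, X) (v, Y) (w, Z)) = - sig (X *v v) w"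
  by (simp add: Rt_def nabt_def sd_bracket_def A_comm bilinear_lzero[OF nab_bil] bilinear_rzero[OF nab_bil]
      bilinear_lzero[OF sig_bil] bilinear_rzero[OF sig_bil] bilinear_lzero[OF brbil])

lemma rep_lin: "lin_on A (\<lambda>M. real_vector.representation SA M X)"
  using lin_on_rep[OF SA_props(2,3)] .

lemma T3: "tr (\<lambda>p. sig p w *v v) = (\<Sum>X\<in>SA. real_vector.representation SA (sig (X *v v) w) X)"
proof -
  let ?R = "real_vector.representation SA"
  have e: "sig p w *v v = (\<Sum>X\<in>SA. ?R (sig p w) X *\<^sub>R (X *v v))" for p
  proof -
    have "sig p w = (\<Sum>X\<in>SA. ?R (sig p w) X *\<^sub>R X)"
      using real_vector.sum_representation_eq[of SA "sig p w" SA] SA_props sig_A by simp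
    then have "sig p w *v v = (\<Sum>X\<in>SA. ?R (sig p w) X *\<^sub>R X) *v v" by simp
    then show ?thesis by (simp add: mv_sum_l mv_scale_l)
  qed
  have "tr (\<lambda>p. sig p w *v v) = (\<Sum>i\<in>UNIV. \<Sum>X\<in>SA. ?R (sig (E i) w) X * (X *v v) $ i)"
    by (simp add: tr_def e sum_component)
  also have "\<dots> = (\<Sum>X\<in>SA. \<Sum>i\<in>UNIV. (X *v v) $ i * ?R (sig (E i) w) X)"
    by (subst sum.swap) (simp add: mult.commute)
  also have "\<dots> = (\<Sum>X\<in>SA. ?R (sig (X *v v) w) X)"
  proof (intro sum.cong refl)
    fix X
    have "sig (X *v v) w = (\<Sum>i\<in>UNIV. (X *v v) $ i *\<^sub>R sig (E i) w)"
      by (subst (1) vec_expand[symmetric]) (simp add: bil_lsum[OF sig_bil] bilinear_lmul[OF sig_bil])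
    then have "?R (sig (X *v v) w) X = (\<Sum>i\<in>UNIV. (X *v v) $ i * ?R (sig (E i) w) X)"
      using lin_on_sum[OF Asub rep_lin, of UNIV "\<lambda>i. sig (E i) w" "\<lambda>i. (X *v v) $ i"] sig_A by simp
    then show "(\<Sum>i\<in>UNIV. (X *v v) $ i * ?R (sig (E i) w) X) = ?R (sig (X *v v) w) X" by simp
  qed
  finally show ?thesis .
qed

end

context sd begin

lemma mat_lin: "linear ((*v) (M::real^'n^'n))" by (simp add: matrix_vector_mul_linear)

lemma trace_g_part:
  assumes Y: "Y \<in> A" and Z: "Z \<in> A"
  shows "tr (\<lambda>p. fst (Rt (p, 0) (v, Y) (w, Z))) =
     lam * B v w - trace (Z ** Y) + (\<Sum>X\<in>SA. real_vector.representation SA (sig (X *v v) w) X)"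
proof -
  have f1: "tr (\<lambda>p. nab p (nab v w) - nab v (nab p w) - nab (br p v) w) = lam * B v w + B (D *v v) w"
    using ricci_op_g[of v "lam *\<^sub>R v + D *v v" w] ric
    by (simp add: ric_def bilinear_ladd[OF bil] bilinear_lmul[OF bil])
  have f2: "tr (\<lambda>p. nab p (Z *v v)) = 0" by (rule U1)
  have f3: "tr (\<lambda>p. sig v w *v p) = B (D *v v) w" by (simp add: tr_matrix trace_sig)
  have f4: "tr (\<lambda>p. nab v (Z *v p)) = 0"
    by (rule U2[OF mat_lin]) (auto intro: selfadj[OF Z] deriv_C Ader[rule_format, OF Z])
  have f5: "tr (\<lambda>p. nab (Y *v p) w) = 0"
    by (rule U3[OF mat_lin]) (auto intro: selfadj[OF Y] deriv_C Ader[rule_format, OF Y])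
  have f6: "tr (\<lambda>p. Z *v br p v) = 0"
  proof (rule tr_flag[OF linear_compose[OF lin_br2 mat_lin, unfolded o_def]])
    fix k x assume "x \<in> C k"
    then have "br x v \<in> C (Suc k)" by (rule C_br2)
    then show "Z *v br x v \<in> C (Suc k)" using deriv_C Ader Z by blast
  qed
  have f7: "tr (\<lambda>p. Z *v (Y *v p)) = trace (Z ** Y)"
    by (simp add: matrix_vector_mul_assoc tr_matrix)
  have "tr (\<lambda>p. fst (Rt (p, 0) (v, Y) (w, Z))) =
     tr (\<lambda>p. nab p (nab v w) - nab v (nab p w) - nab (br p v) w) - tr (\<lambda>p. nab p (Z *v v))
     - tr (\<lambda>p. sig v w *v p) + tr (\<lambda>p. nab v (Z *v p)) + tr (\<lambda>p. sig p w *v v)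
     + tr (\<lambda>p. nab (Y *v p) w) + tr (\<lambda>p. Z *v br p v) - tr (\<lambda>p. Z *v (Y *v p))"
    by (simp only: Rt_g tr_add tr_diff)
  also have "\<dots> = lam * B v w - trace (Z ** Y) + (\<Sum>X\<in>SA. real_vector.representation SA (sig (X *v v) w) X)"
    by (simp only: f1 f2 f3 f4 f5 f6 f7 T3)
  finally show ?thesis .
qed

lemma ricci_t:
  assumes Y: "Y \<in> A" and Z: "Z \<in> A"
  shows "ricci_form Vt (sd_bracket br) (sd_metric B lam) (v, Y) (w, Z) = lam * B v w - trace (Z ** Y)"
proof -
  let ?R = "real_vector.representation SA"
  have QV: "(v, Y) \<in> Vt" "(w, Z) \<in> Vt" using Y Z by auto
  have "ricci_form Vt (sd_bracket br) (sd_metric B lam) (v, Y) (w, Z) = trace_on Vt (\<lambda>P. Rt P (v, Y) (w, Z))"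
    unfolding ricci_form_def by (rule trace_on_cong[OF _ Vt_sub]) (use curv_t QV in blast)
  also have "\<dots> = (\<Sum>i\<in>UNIV. fst (Rt (E i, 0) (v, Y) (w, Z)) $ i)
      + (\<Sum>X\<in>SA. ?R (snd (Rt (0, X) (v, Y) (w, Z))) X)"
  proof (rule trace_frame2[OF Vt_sub linear_lin_on[OF Rt_lin]])
    show "Rt P (v, Y) (w, Z) \<in> Vt" for P
      unfolding Rt_def using nabt_V Vt_sub by (intro subspace_diff) auto
    show "finite (UNIV :: 'n set)" by simp
    show "finite SA" by (rule SA_props)
    show "(E i, 0) \<in> Vt" for i :: 'n using Asub by (simp add: subspace_0)
    show "(0, X) \<in> Vt" if "X \<in> SA" for X using that SA_props by auto
    show "lin_on Vt (\<lambda>P. fst P $ i)" for i :: 'n by (simp add: lin_on_def)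
    show "lin_on Vt (\<lambda>P. ?R (snd P) X)" for X
      using rep_lin[of X] by (auto simp: lin_on_def)
    show "P = (\<Sum>i\<in>UNIV. fst P $ i *\<^sub>R (E i, 0)) + (\<Sum>X\<in>SA. ?R (snd P) X *\<^sub>R (0, X))"
      if "P \<in> Vt" for P
    proof -
      have "snd P \<in> span SA" using that SA_props by auto
      then have "(\<Sum>X\<in>SA. ?R (snd P) X *\<^sub>R X) = snd P"
        using real_vector.sum_representation_eq[of SA "snd P" SA] SA_props by simp
      then show ?thesis
        by (simp add: prod_eq_iff fst_sum snd_sum vec_expand)
    qed
  qed
  also have "(\<Sum>i\<in>UNIV. fst (Rt (E i, 0) (v, Y) (w, Z)) $ i) = tr (\<lambda>p. fst (Rt (p, 0) (v, Y) (w, Z)))"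
    by (simp add: tr_def)
  also have "(\<Sum>X\<in>SA. ?R (snd (Rt (0, X) (v, Y) (w, Z))) X) = - (\<Sum>X\<in>SA. ?R (sig (X *v v) w) X)"
  proof -
    have "?R (snd (Rt (0, X) (v, Y) (w, Z))) X = - ?R (sig (X *v v) w) X" if "X \<in> SA" for X
    proof -
      have "X \<in> A" using that SA_props by auto
      then have "snd (Rt (0, X) (v, Y) (w, Z)) = - sig (X *v v) w" using Rt_a Y by blast
      moreover have "sig (X *v v) w \<in> span SA" using sig_A SA_props by auto
      ultimately show ?thesis using real_vector.representation_neg[OF SA_props(2)] by simp
    qed
    then show ?thesis by (simp add: sum_negf)
  qed
  finally show ?thesis using trace_g_part[OF Y Z] by simp
qed

end

context sd begin

lemma ricci_op_t:
  assumes u: "u \<in> Vt"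
  shows "ricci_op Vt (sd_bracket br) (sd_metric B lam) u = lam *\<^sub>R u"
proof -
  obtain v Y where vY: "u = (v, Y)" "Y \<in> A" using u by auto
  have key: "sd_metric B lam (lam *\<^sub>R u) Q = ricci_form Vt (sd_bracket br) (sd_metric B lam) u Q"
    if Q: "Q \<in> Vt" for Q
  proof -
    obtain w Z where wZ: "Q = (w, Z)" "Z \<in> A" using Q by auto
    have "sd_metric B lam (lam *\<^sub>R u) Q = lam * B v w - trace (Y ** Z)"
      using vY wZ lam by (simp add: sd_metric_def bilinear_lmul[OF bil] mm_scale_l trace_scale)
    also have "\<dots> = ricci_form Vt (sd_bracket br) (sd_metric B lam) u Q"
      using ricci_t[OF vY(2) wZ(2), of v w] vY wZ by (simp add: trace_mul_sym[of Y])
    finally show ?thesis .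
  qed
  have luV: "lam *\<^sub>R u \<in> Vt" using u Vt_sub by (simp add: subspace_scale)
  show ?thesis
    unfolding ricci_op_def
  proof (rule the_equality)
    show "lam *\<^sub>R u \<in> Vt \<and> (\<forall>Z\<in>Vt. sd_metric B lam (lam *\<^sub>R u) Z = ricci_form Vt (sd_bracket br) (sd_metric B lam) u Z)"
      using luV key by blast
    fix W assume W: "W \<in> Vt \<and> (\<forall>Z\<in>Vt. sd_metric B lam W Z = ricci_form Vt (sd_bracket br) (sd_metric B lam) u Z)"
    show "W = lam *\<^sub>R u"
    proof (rule gt_eqI)
      show "W \<in> Vt" using W by blast
      show "lam *\<^sub>R u \<in> Vt" by (rule luV)
      fix Z assume Z: "Z \<in> Vt"
      then have 1: "sd_metric B lam W Z = ricci_form Vt (sd_bracket br) (sd_metric B lam) u Z" using W by blast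
      show "sd_metric B lam W Z = sd_metric B lam (lam *\<^sub>R u) Z" by (simp only: 1 key[OF Z])
    qed
  qed
qed

lemma brt_lin2: "linear (sd_bracket br P)"
  by (intro linearI)
     (simp_all add: sd_bracket_def bilinear_radd[OF brbil] bilinear_rmul[OF brbil]
       matrix_vector_right_distrib matrix_vector_mult_add_rdistrib mv_scale_l
       matrix_scaleR_vector_ac mm_add_r mm_scale_l matrix_add_ldistrib
       matrix_scalar_ac algebra_simps)

lemma brt_bil: "bilinear (sd_bracket br)"
  unfolding bilinear_def using brt_lin1 brt_lin2 by blast

lemma jacobi_t:
  assumes X: "X \<in> A" and Y: "Y \<in> A" and Z: "Z \<in> A"
  shows "sd_bracket br (u, X) (sd_bracket br (v, Y) (w, Z)) + sd_bracket br (v, Y) (sd_bracket br (w, Z) (u, X))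
     + sd_bracket br (w, Z) (sd_bracket br (u, X) (v, Y)) = 0"
proof -
  have z: "(0::real^'n^'n) \<in> A" using Asub by (simp add: subspace_0)
  have c1: "X *v (Y *v w) = Y *v (X *v w)" using A_comm[OF X Y] by (simp add: matrix_vector_mul_assoc)
  have c2: "X *v (Z *v v) = Z *v (X *v v)" using A_comm[OF X Z] by (simp add: matrix_vector_mul_assoc)
  have c3: "Y *v (Z *v u) = Z *v (Y *v u)" using A_comm[OF Y Z] by (simp add: matrix_vector_mul_assoc)
  have a1: "br (Y *v w) u = - br u (Y *v w)" by (rule br_anti)
  have a2: "br (X *v v) w = - br w (X *v v)" by (rule br_anti)
  have a3: "br (Z *v u) v = - br v (Z *v u)" by (rule br_anti)
  have j: "br u (br v w) + br v (br w u) + br w (br u v) = 0" by (rule jacobi)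
  have fst_eq: "br u (br v w + Y *v w - Z *v v) + X *v (br v w + Y *v w - Z *v v)
     + (br v (br w u + Z *v u - X *v w) + Y *v (br w u + Z *v u - X *v w))
     + (br w (br u v + X *v v - Y *v u) + Z *v (br u v + X *v v - Y *v u)) = 0"
    using j c1 c2 c3 a1 a2 a3
    by (simp add: bilinear_radd[OF brbil] bilinear_rsub[OF brbil] matrix_vector_right_distrib
        matrix_vector_mult_diff_distrib deriv[OF X] deriv[OF Y] deriv[OF Z] algebra_simps)
  show ?thesis
    using fst_eq by (simp add: brt_pair[OF Y Z] brt_pair[OF Z X] brt_pair[OF X Y] brt_pair[OF X z]
        brt_pair[OF Y z] brt_pair[OF Z z] zero_prod_def)
qed

lemma lie_t: "lie_algebra Vt (sd_bracket br)"
  unfolding lie_algebra_def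
proof (intro conjI ballI)
  show "subspace Vt" by (rule Vt_sub)
  show "bilinear (sd_bracket br)" by (rule brt_bil)
  fix x y z assume xyz: "x \<in> Vt" "y \<in> Vt" "z \<in> Vt"
  show "sd_bracket br x y \<in> Vt" using brt_V xyz by blast
  show "sd_bracket br x x = 0" by (simp add: sd_bracket_def br_self zero_prod_def)
  show "sd_bracket br x (sd_bracket br y z) + sd_bracket br y (sd_bracket br z x) + sd_bracket br z (sd_bracket br x y) = 0"
  proof -
    obtain u X where "x = (u, X)" "X \<in> A" using xyz(1) by auto
    moreover obtain v Y where "y = (v, Y)" "Y \<in> A" using xyz(2) by auto
    moreover obtain w Z where "z = (w, Z)" "Z \<in> A" using xyz(3) by auto
    ultimately show ?thesis using jacobi_t by simp
  qed
qed

lemma metric_t: "lie_metric Vt (sd_metric B lam)"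
  unfolding lie_metric_def
proof (intro conjI ballI impI)
  show "bilinear (sd_metric B lam)" by (rule gt_bil)
  fix x y assume "x \<in> Vt" "y \<in> Vt"
  show "sd_metric B lam x y = sd_metric B lam y x"
    unfolding sd_metric_def using sym[of "fst x" "fst y"] trace_mul_sym[of "snd x" "snd y"] by simp
next
  fix x assume "x \<in> Vt" "\<forall>y\<in>Vt. sd_metric B lam x y = 0"
  then show "x = 0" by (rule gt_nd)
qed

end

context sd begin

lemma lc_G: "lower_central (UNIV \<times> {0}) (sd_bracket br) k = C k \<times> {0::real^'n^'n}"
proof (induction k)
  case 0 then show ?case by simp
next
  case (Suc k)
  let ?f = "\<lambda>v::real^'n. (v, 0::real^'n^'n)"
  have linf: "linear ?f" by (intro linearI) (simp_all add: zero_prod_def)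
  have S: "{sd_bracket br x y |x y. x \<in> UNIV \<times> {0} \<and> y \<in> C k \<times> {0}}
      = ?f ` {br x y |x y. x \<in> UNIV \<and> y \<in> C k}"
    by (auto simp: sd_bracket_def)
  have "lower_central (UNIV \<times> {0}) (sd_bracket br) (Suc k)
      = span {sd_bracket br x y |x y. x \<in> UNIV \<times> {0} \<and> y \<in> lower_central (UNIV \<times> {0}) (sd_bracket br) k}"
    by simp
  also have "\<dots> = span (?f ` {br x y |x y. x \<in> UNIV \<and> y \<in> C k})" by (simp only: Suc S)
  also have "\<dots> = ?f ` span {br x y |x y. x \<in> UNIV \<and> y \<in> C k}"
    by (rule real_vector.linear_span_image[OF linf])
  also have "\<dots> = C (Suc k) \<times> {0}" by auto
  finally show ?case .
qed

lemma nil_G: "nilpotent_lie (UNIV \<times> {0}) (sd_bracket br)"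
proof -
  obtain m where "C m = {0}" using C_end by blast
  then have "lower_central (UNIV \<times> {0}) (sd_bracket br) m = {0}"
    by (simp add: lc_G zero_prod_def)
  then show ?thesis unfolding nilpotent_lie_def by blast
qed

lemma iwasawa_t: "pseudo_iwasawa Vt (sd_bracket br) (sd_metric B lam) (UNIV \<times> {0}) ({0} \<times> A)"
  unfolding pseudo_iwasawa_def
proof (intro conjI ballI)
  have z: "(0::real^'n^'n) \<in> A" using Asub by (simp add: subspace_0)
  show "subspace (UNIV \<times> {0::real^'n^'n})"
    by (intro real_vector.subspace_Times subspace_UNIV real_vector.subspace_single_0)
  show "subspace ({0::real^'n} \<times> A)"
    by (intro real_vector.subspace_Times Asub real_vector.subspace_single_0)
  show "UNIV \<times> {0} \<subseteq> Vt" using z by auto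
  show "{0} \<times> A \<subseteq> Vt" by auto
  show "UNIV \<times> {0} \<inter> {0} \<times> A = {0}" using z by (auto simp: zero_prod_def)
  show "{x + y |x y. x \<in> UNIV \<times> {0} \<and> y \<in> {0} \<times> A} = Vt"
  proof
    show "{x + y |x y. x \<in> UNIV \<times> {0} \<and> y \<in> {0} \<times> A} \<subseteq> Vt" by auto
    show "Vt \<subseteq> {x + y |x y. x \<in> UNIV \<times> {0} \<and> y \<in> {0} \<times> A}"
    proof
      fix P assume "P \<in> Vt"
      then obtain a M where "P = (a, M)" "M \<in> A" by auto
      then have "P = (a, 0) + (0, M)" by simp
      then show "P \<in> {x + y |x y. x \<in> UNIV \<times> {0} \<and> y \<in> {0} \<times> A}" using \<open>M \<in> A\<close> by blast
    qed
  qed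
  show "nilpotent_lie (UNIV \<times> {0}) (sd_bracket br)" by (rule nil_G)
  fix x y
  show "x \<in> UNIV \<times> {0} \<Longrightarrow> y \<in> {0} \<times> A \<Longrightarrow> sd_metric B lam x y = 0"
    by (auto simp: sd_metric_def bilinear_rzero[OF bil] trace_def)
  show "x \<in> Vt \<Longrightarrow> y \<in> UNIV \<times> {0} \<Longrightarrow> sd_bracket br x y \<in> UNIV \<times> {0}"
    by (auto simp: sd_bracket_def)
  show "x \<in> {0} \<times> A \<Longrightarrow> y \<in> {0} \<times> A \<Longrightarrow> sd_bracket br x y = 0"
    by (auto simp: sd_bracket_def A_comm bilinear_lzero[OF brbil] zero_prod_def)
next
  fix X u w :: "(real^'n) \<times> (real^'n^'n)" assume X: "X \<in> {0} \<times> A" and u: "u \<in> Vt" and w: "w \<in> Vt"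
  obtain M where M: "X = (0, M)" "M \<in> A" using X by auto
  obtain a Y where aY: "u = (a, Y)" "Y \<in> A" using u by auto
  obtain b Z where bZ: "w = (b, Z)" "Z \<in> A" using w by auto
  show "sd_metric B lam (sd_bracket br X u) w = sd_metric B lam u (sd_bracket br X w)"
    using M aY bZ selfadj[OF M(2), of a b]
    by (simp add: sd_bracket_def A_comm sd_metric_def bilinear_lzero[OF brbil] trace_def)
qed

end

theorem theorem4p1:
  fixes br :: "real^'n \<Rightarrow> real^'n \<Rightarrow> real^'n"
    and B :: "real^'n \<Rightarrow> real^'n \<Rightarrow> real"
    and lam :: real
    and D :: "real^'n^'n"
    and A :: "(real^'n^'n) set"
  assumes lie: "lie_algebra UNIV br"
    and nil: "nilpotent_lie UNIV br"
    and met: "lie_metric UNIV B"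
    and lam: "lam \<noteq> 0"
    and Dder: "is_derivation br D"
    and ric: "\<forall>v. ricci_op UNIV br B v = lam *\<^sub>R v + D *v v"
    and Asub: "subspace A"
    and Alie: "\<forall>X\<in>A. \<forall>Y\<in>A. X ** Y - Y ** X \<in> A"
    and Ader: "\<forall>X\<in>A. is_derivation br X"
    and Aself: "\<forall>X\<in>A. self_adjoint_wrt B X"
    and DA: "D \<in> A"
    and Anondeg: "\<forall>X\<in>A. (\<forall>Y\<in>A. trace (X ** Y) = 0) \<longrightarrow> X = 0"
  shows "lie_algebra (UNIV \<times> A) (sd_bracket br)
       \<and> lie_metric (UNIV \<times> A) (sd_metric B lam)
       \<and> (\<forall>u\<in>UNIV \<times> A. ricci_op (UNIV \<times> A) (sd_bracket br) (sd_metric B lam) u = lam *\<^sub>R u)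
       \<and> pseudo_iwasawa (UNIV \<times> A) (sd_bracket br) (sd_metric B lam) (UNIV \<times> {0}) ({0} \<times> A)"
proof -
  interpret sd B br lam D A
    by unfold_locales (use met lie nil lam Dder ric Asub Alie Ader Aself DA Anondeg in auto)
  show ?thesis using lie_t metric_t ricci_op_t iwasawa_t by blast
qed

end
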